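(* Let $G$ be a finitely generated group and let $H=G/K$, where $K$ is the normal subgroup of $G$ generated by finitely many elements $r_1,\dots,r_m\in G$ together with all values $v_j(g_1,\dots,g_{k_j})$, $(g_1,\dots,g_{k_j})\in G^{k_j}$, of finitely many words $v_1,\dots,v_p$ (each $v_j$ an element of a free group of rank $k_j$). If $G$ has CFQ (respectively ReFQ, respectively co-ReFQ), then so does $H$.
   Context: Let $G$ be generated by a finite set $S$. A marked finite group is a pair $(F,f)$ with $F$ a finite group (given by its multiplication table) and $f:S\to F$ a function. $G$ has CFQ if there is an algorithm which, given $(F,f)$, decides whether $f$ extends to a group homomorphism $G\to F$; ReFQ if there is an algorithm halting exactly on those $(F,f)$ for which $f$ extends; co-ReFQ if there is an algorithm halting exactly on those $(F,f)$ for which $f$ does not extend. These properties are independent of the finite generating set chosen. *)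

theory Defs
  imports "HOL-Algebra.Algebra" "HOL-Library.Nat_Bijection"
begin

datatype recf = Zero | Succ | Proj nat | Comp recf "recf list" | PrimRec recf recf | Minim recf

definition arg :: "nat \<Rightarrow> nat list \<Rightarrow> nat" where
  "arg i xs = (if i < length xs then xs ! i else 0)"

inductive eval :: "recf \<Rightarrow> nat list \<Rightarrow> nat \<Rightarrow> bool" where
  eval_Zero: "eval Zero xs 0"
| eval_Succ: "eval Succ xs (Suc (arg 0 xs))"
| eval_Proj: "eval (Proj i) xs (arg i xs)"
| eval_Comp: "list_all2 (\<lambda>g y. eval g xs y) gs ys \<Longrightarrow> eval f ys z \<Longrightarrow> eval (Comp f gs) xs z"
| eval_Pr0: "eval f xs z \<Longrightarrow> eval (PrimRec f g) (0 # xs) z"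
| eval_PrS: "eval (PrimRec f g) (n # xs) y \<Longrightarrow> eval g (y # n # xs) z
             \<Longrightarrow> eval (PrimRec f g) (Suc n # xs) z"
| eval_Mn: "eval f (n # xs) 0 \<Longrightarrow> (\<forall>m<n. \<exists>v. eval f (m # xs) v \<and> v > 0)
             \<Longrightarrow> eval (Minim f) xs n"

definition halts :: "recf \<Rightarrow> nat \<Rightarrow> bool" where
  "halts t x \<longleftrightarrow> (\<exists>v. eval t [x] v)"

definition tbl_mult :: "nat \<Rightarrow> nat list \<Rightarrow> nat \<Rightarrow> nat \<Rightarrow> nat" where
  "tbl_mult n tab i j = tab ! (i * n + j)"

definition tbl_grp :: "nat \<Rightarrow> nat list \<Rightarrow> nat monoid" where
  "tbl_grp n tab = \<lparr> carrier = {..<n}, monoid.mult = tbl_mult n tab,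
     one = (SOME e. e < n \<and> (\<forall>x<n. tbl_mult n tab e x = x \<and> tbl_mult n tab x e = x)) \<rparr>"

text \<open>Valid input: a multiplication table of a group of order n, and a marking
  (a list of elements, one for each of the k generators).\<close>
definition valid_marked :: "nat \<Rightarrow> nat \<Rightarrow> nat list \<Rightarrow> nat list \<Rightarrow> bool" where
  "valid_marked k n tab fl \<longleftrightarrow> length tab = n * n \<and> (\<forall>x\<in>set tab. x < n)
     \<and> group (tbl_grp n tab) \<and> length fl = k \<and> (\<forall>x\<in>set fl. x < n)"

definition code :: "nat \<Rightarrow> nat list \<Rightarrow> nat list \<Rightarrow> nat" where
  "code n tab fl = prod_encode (n, prod_encode (list_encode tab, list_encode fl))"

definition extends_hom :: "('a, 'b) monoid_scheme \<Rightarrow> 'a list \<Rightarrow> nat \<Rightarrow> nat list \<Rightarrow> nat list \<Rightarrow> bool" where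
  "extends_hom G s n tab fl \<longleftrightarrow>
     (\<exists>h \<in> hom G (tbl_grp n tab). \<forall>i<length s. h (s ! i) = fl ! i)"

definition gen_list :: "('a, 'b) monoid_scheme \<Rightarrow> 'a list \<Rightarrow> bool" where
  "gen_list G s \<longleftrightarrow> set s \<subseteq> carrier G \<and> generate G (set s) = carrier G"

definition CFQ :: "('a, 'b) monoid_scheme \<Rightarrow> bool" where
  "CFQ G \<longleftrightarrow> (\<exists>s. gen_list G s \<and> (\<exists>t. \<forall>n tab fl. valid_marked (length s) n tab fl \<longrightarrow>
      halts t (code n tab fl) \<and> (eval t [code n tab fl] 0 \<longleftrightarrow> extends_hom G s n tab fl)))"

definition ReFQ :: "('a, 'b) monoid_scheme \<Rightarrow> bool" where
  "ReFQ G \<longleftrightarrow> (\<exists>s. gen_list G s \<and> (\<exists>t. \<forall>n tab fl. valid_marked (length s) n tab fl \<longrightarrow>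
      (halts t (code n tab fl) \<longleftrightarrow> extends_hom G s n tab fl)))"

definition coReFQ :: "('a, 'b) monoid_scheme \<Rightarrow> bool" where
  "coReFQ G \<longleftrightarrow> (\<exists>s. gen_list G s \<and> (\<exists>t. \<forall>n tab fl. valid_marked (length s) n tab fl \<longrightarrow>
      (halts t (code n tab fl) \<longleftrightarrow> \<not> extends_hom G s n tab fl)))"

text \<open>A word in the free group on generators 0..k-1: list of letters (i, b), b = True meaning x_i^-1.\<close>
definition word_eval :: "('a, 'b) monoid_scheme \<Rightarrow> (nat \<times> bool) list \<Rightarrow> (nat \<Rightarrow> 'a) \<Rightarrow> 'a" where
  "word_eval G w g = foldr (\<lambda>(i, b) x. (if b then inv\<^bsub>G\<^esub> (g i) else g i) \<otimes>\<^bsub>G\<^esub> x) w \<one>\<^bsub>G\<^esub>"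

definition word_values :: "('a, 'b) monoid_scheme \<Rightarrow> nat \<Rightarrow> (nat \<times> bool) list \<Rightarrow> 'a set" where
  "word_values G k w = {word_eval G w g | g. \<forall>i<k. g i \<in> carrier G}"

definition normal_closure :: "('a, 'b) monoid_scheme \<Rightarrow> 'a set \<Rightarrow> 'a set" where
  "normal_closure G A = generate G {x \<otimes>\<^bsub>G\<^esub> a \<otimes>\<^bsub>G\<^esub> inv\<^bsub>G\<^esub> x | x a. x \<in> carrier G \<and> a \<in> A}"

end

theory Submission
  imports Defs
begin

lemma arg_Cons0[simp]: "arg 0 (x # xs) = x" by (simp add: arg_def)
lemma arg_ConsS[simp]: "arg (Suc i) (x # xs) = arg i xs" by (simp add: arg_def)
lemma arg_Cons_num[simp]: "arg (numeral k) (x # xs) = arg (pred_numeral k) xs"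
  by (simp add: numeral_eq_Suc)
lemma arg_Nil[simp]: "arg i [] = 0" by (simp add: arg_def)

lemma eval_det: "Defs.eval t xs v \<Longrightarrow> Defs.eval t xs w \<Longrightarrow> v = w"
proof (induction arbitrary: w rule: eval.induct)
  case (eval_Zero xs) from eval_Zero.prems show ?case by (cases rule: eval.cases) auto
next
  case (eval_Succ xs) from eval_Succ.prems show ?case by (cases rule: eval.cases) auto
next
  case (eval_Proj i xs) from eval_Proj.prems show ?case by (cases rule: eval.cases) auto
next
  case (eval_Comp xs gs ys f z)
  from eval_Comp.prems obtain ys' where a: "list_all2 (\<lambda>g y. Defs.eval g xs y) gs ys'" and b: "Defs.eval f ys' w"
    by (cases rule: eval.cases) auto
  have "ys = ys'" using eval_Comp.IH(1) a
  proof (induction gs arbitrary: ys ys')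
    case Nil then show ?case by simp
  next
    case (Cons g gs)
    then show ?case by (auto simp: list_all2_Cons1)
  qed
  then show ?case using eval_Comp.IH(2) b by blast
next
  case (eval_Pr0 f xs z g) from eval_Pr0.prems eval_Pr0.IH show ?case by (cases rule: eval.cases) auto
next
  case (eval_PrS f g n xs y z)
  from eval_PrS.prems obtain y' where "Defs.eval (PrimRec f g) (n # xs) y'" "Defs.eval g (y' # n # xs) w"
    by (cases rule: eval.cases) auto
  then show ?case using eval_PrS.IH by metis
next
  case (eval_Mn f n xs)
  from eval_Mn.prems obtain n' where a: "Defs.eval f (n' # xs) 0" and b: "\<forall>m<n'. \<exists>v. Defs.eval f (m # xs) v \<and> v > 0" and c: "w = n'"
    by (cases rule: eval.cases) auto
  show ?case
  proof (rule ccontr)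
    assume "n \<noteq> w"
    then consider "n < n'" | "n' < n" using c by linarith
    then show False
    proof cases
      case 1 then obtain v where "Defs.eval f (n # xs) v" "v > 0" using b by blast
      then show False using eval_Mn.IH(1) by fastforce
    next
      case 2 then obtain v where "Defs.eval f (n' # xs) v \<and> (\<forall>w. Defs.eval f (n' # xs) w \<longrightarrow> v = w)" "v > 0"
        using eval_Mn.IH(2) by blast
      then show False using a by auto
    qed
  qed
qed

definition comp :: "recf \<Rightarrow> (nat list \<Rightarrow> nat) \<Rightarrow> bool" where
  "comp t F \<longleftrightarrow> (\<forall>xs. Defs.eval t xs (F xs))"

lemma comp_eq: "comp t F \<Longrightarrow> (\<And>xs. F xs = G xs) \<Longrightarrow> comp t G"
  by (simp add: comp_def)

lemma comp_Zero: "comp Zero (\<lambda>_. 0)" by (simp add: comp_def eval_Zero)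
lemma comp_Succ: "comp Succ (\<lambda>xs. Suc (arg 0 xs))" by (simp add: comp_def eval_Succ)
lemma comp_Proj: "comp (Proj i) (arg i)" by (simp add: comp_def eval_Proj)

lemma comp_Comp1: "comp f F \<Longrightarrow> comp a A \<Longrightarrow> comp (Comp f [a]) (\<lambda>xs. F [A xs])"
  unfolding comp_def by (auto intro!: eval_Comp)
lemma comp_Comp2: "comp f F \<Longrightarrow> comp a A \<Longrightarrow> comp b B \<Longrightarrow> comp (Comp f [a, b]) (\<lambda>xs. F [A xs, B xs])"
  unfolding comp_def by (auto intro!: eval_Comp)
lemma comp_Comp3: "comp f F \<Longrightarrow> comp a A \<Longrightarrow> comp b B \<Longrightarrow> comp c C \<Longrightarrow>
   comp (Comp f [a, b, c]) (\<lambda>xs. F [A xs, B xs, C xs])"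
  unfolding comp_def by (auto intro!: eval_Comp)

lemma comp_Minim: assumes "comp f F" "\<And>xs. \<exists>n. F (n # xs) = 0"
  shows "comp (Minim f) (\<lambda>xs. LEAST n. F (n # xs) = 0)"
  unfolding comp_def
proof
  fix xs
  have "F ((LEAST n. F (n # xs) = 0) # xs) = 0" using assms(2) by (rule LeastI_ex)
  moreover have "\<forall>m<(LEAST n. F (n # xs) = 0). \<exists>v. Defs.eval f (m # xs) v \<and> v > 0"
    using assms(1) not_less_Least unfolding comp_def by blast
  ultimately show "Defs.eval (Minim f) xs (LEAST n. F (n # xs) = 0)"
    using assms(1) unfolding comp_def by (metis eval_Mn)
qed

lemma comp_PrimRec: assumes "comp f F" "comp g G" "comp a A" "comp b B"
  shows "comp (Comp (PrimRec f g) [a, b]) (\<lambda>xs. rec_nat (F [B xs]) (\<lambda>k y. G [y, k, B xs]) (A xs))"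
  unfolding comp_def
proof
  fix xs
  have "Defs.eval (PrimRec f g) [n, B xs] (rec_nat (F [B xs]) (\<lambda>k y. G [y, k, B xs]) n)" for n
    by (induction n) (use assms in \<open>auto simp: comp_def intro: eval_Pr0 eval_PrS\<close>)
  then show "Defs.eval (Comp (PrimRec f g) [a, b]) xs (rec_nat (F [B xs]) (\<lambda>k y. G [y, k, B xs]) (A xs))"
    using assms by (auto simp: comp_def intro!: eval_Comp)
qed


lemma rn_suc: "rec_nat b (\<lambda>k y. Suc y) n = n + b" by (induction n) auto
lemma rn_pred: "rec_nat 0 (\<lambda>k y. k) n = n - 1" by (cases n) auto
lemma rn_monus: "rec_nat x (\<lambda>k y. y - Suc 0) n = x - n" by (induction n) auto
lemma rn_mult: "rec_nat 0 (\<lambda>k y. y + b) n = n * b" by (induction n) auto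
lemma rn_tri: "rec_nat 0 (\<lambda>k y. Suc (y + k)) n = triangle n" by (induction n) auto
lemma rn_pow: "rec_nat (Suc 0) (\<lambda>k y. y * x) n = x ^ n" by (induction n) auto

definition "pred_p = Comp (PrimRec Zero (Proj 1)) [Proj 0, Zero]"
lemma comp_pred: "comp pred_p (\<lambda>xs. arg 0 xs - 1)"
  unfolding pred_p_def
  by (rule comp_eq[OF comp_PrimRec[OF comp_Zero comp_Proj comp_Proj comp_Zero]]) (simp add: rn_pred)

definition "add_p = Comp (PrimRec (Proj 0) (Comp Succ [Proj 0])) [Proj 0, Proj 1]"
lemma comp_add: "comp add_p (\<lambda>xs. arg 0 xs + arg 1 xs)"
  unfolding add_p_def
  by (rule comp_eq[OF comp_PrimRec[OF comp_Proj comp_Comp1[OF comp_Succ comp_Proj] comp_Proj comp_Proj]]) (simp add: rn_suc)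

definition "monus_p = Comp (PrimRec (Proj 0) (Comp pred_p [Proj 0])) [Proj 1, Proj 0]"
lemma comp_monus: "comp monus_p (\<lambda>xs. arg 0 xs - arg 1 xs)"
  unfolding monus_p_def
  by (rule comp_eq[OF comp_PrimRec[OF comp_Proj comp_Comp1[OF comp_pred comp_Proj] comp_Proj comp_Proj]]) (simp add: rn_monus)

definition "mult_p = Comp (PrimRec Zero (Comp add_p [Proj 0, Proj 2])) [Proj 0, Proj 1]"
lemma comp_mult: "comp mult_p (\<lambda>xs. arg 0 xs * arg 1 xs)"
  unfolding mult_p_def
  by (rule comp_eq[OF comp_PrimRec[OF comp_Zero comp_Comp2[OF comp_add comp_Proj comp_Proj] comp_Proj comp_Proj]]) (simp add: rn_mult)

definition "tri_p = Comp (PrimRec Zero (Comp add_p [Proj 0, Comp Succ [Proj 1]])) [Proj 0, Zero]"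
lemma comp_tri: "comp tri_p (\<lambda>xs. triangle (arg 0 xs))"
  unfolding tri_p_def
  by (rule comp_eq[OF comp_PrimRec[OF comp_Zero comp_Comp2[OF comp_add comp_Proj comp_Comp1[OF comp_Succ comp_Proj]] comp_Proj comp_Zero]]) (simp add: rn_tri)

definition "pow_p = Comp (PrimRec (Comp Succ [Zero]) (Comp mult_p [Proj 0, Proj 2])) [Proj 1, Proj 0]"
lemma comp_pow: "comp pow_p (\<lambda>xs. arg 0 xs ^ arg 1 xs)"
  unfolding pow_p_def
  by (rule comp_eq[OF comp_PrimRec[OF comp_Comp1[OF comp_Succ comp_Zero] comp_Comp2[OF comp_mult comp_Proj comp_Proj] comp_Proj comp_Proj]]) (simp add: rn_pow)

fun const_p :: "nat \<Rightarrow> recf" where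
  "const_p 0 = Zero" | "const_p (Suc n) = Comp Succ [const_p n]"
lemma comp_const: "comp (const_p c) (\<lambda>_. c)"
  by (induction c) (auto intro: comp_Zero comp_eq[OF comp_Comp1[OF comp_Succ]])

definition "pair_p = Comp add_p [Comp tri_p [Comp add_p [Proj 0, Proj 1]], Proj 0]"
lemma comp_pair: "comp pair_p (\<lambda>xs. prod_encode (arg 0 xs, arg 1 xs))"
  unfolding pair_p_def
  by (rule comp_eq[OF comp_Comp2[OF comp_add comp_Comp1[OF comp_tri comp_Comp2[OF comp_add comp_Proj comp_Proj]] comp_Proj]])
     (simp add: prod_encode_def)

lemma ap1: "comp f F \<Longrightarrow> comp a A \<Longrightarrow> (\<And>xs. H xs = F [A xs]) \<Longrightarrow> comp (Comp f [a]) H"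
  by (rule comp_eq[OF comp_Comp1]) auto
lemma ap2: "comp f F \<Longrightarrow> comp a A \<Longrightarrow> comp b B \<Longrightarrow> (\<And>xs. H xs = F [A xs, B xs]) \<Longrightarrow> comp (Comp f [a, b]) H"
  by (rule comp_eq[OF comp_Comp2]) auto
lemma ap3: "comp f F \<Longrightarrow> comp a A \<Longrightarrow> comp b B \<Longrightarrow> comp c C \<Longrightarrow> (\<And>xs. H xs = F [A xs, B xs, C xs]) \<Longrightarrow> comp (Comp f [a, b, c]) H"
  by (rule comp_eq[OF comp_Comp3]) auto

section \<open>Decision predicates (0 = true)\<close>

definition dec :: "recf \<Rightarrow> (nat list \<Rightarrow> bool) \<Rightarrow> bool" where
  "dec t P \<longleftrightarrow> (\<exists>F. comp t F \<and> (\<forall>xs. F xs = 0 \<longleftrightarrow> P xs))"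

lemma dec_eq: "dec t P \<Longrightarrow> (\<And>xs. P xs = Q xs) \<Longrightarrow> dec t Q"
  by (simp add: dec_def)

definition "eq_p a b = Comp add_p [Comp monus_p [a, b], Comp monus_p [b, a]]"
lemma dec_eqp: assumes "comp a A" "comp b B" shows "dec (eq_p a b) (\<lambda>xs. A xs = B xs)"
  unfolding dec_def eq_p_def
  by (intro exI[of _ "\<lambda>xs. (A xs - B xs) + (B xs - A xs)"] conjI ap2[OF comp_add ap2[OF comp_monus assms] ap2[OF comp_monus assms(2,1)]]) auto

definition "conj_p a b = Comp add_p [a, b]"
lemma dec_conj: assumes "dec a P" "dec b Q" shows "dec (conj_p a b) (\<lambda>xs. P xs \<and> Q xs)"
proof -
  obtain F G where "comp a F" "\<And>xs. F xs = 0 \<longleftrightarrow> P xs" "comp b G" "\<And>xs. G xs = 0 \<longleftrightarrow> Q xs"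
    using assms unfolding dec_def by blast
  then show ?thesis unfolding dec_def conj_p_def
    by (intro exI[of _ "\<lambda>xs. F xs + G xs"] conjI ap2[OF comp_add]) auto
qed

definition "disj_p a b = Comp mult_p [a, b]"
lemma dec_disj: assumes "dec a P" "dec b Q" shows "dec (disj_p a b) (\<lambda>xs. P xs \<or> Q xs)"
proof -
  obtain F G where "comp a F" "\<And>xs. F xs = 0 \<longleftrightarrow> P xs" "comp b G" "\<And>xs. G xs = 0 \<longleftrightarrow> Q xs"
    using assms unfolding dec_def by blast
  then show ?thesis unfolding dec_def disj_p_def
    by (intro exI[of _ "\<lambda>xs. F xs * G xs"] conjI ap2[OF comp_mult]) auto
qed

definition "neg_p a = Comp monus_p [const_p 1, a]"
lemma dec_neg: assumes "dec a P" shows "dec (neg_p a) (\<lambda>xs. \<not> P xs)"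
proof -
  obtain F where F: "comp a F" "\<And>xs. F xs = 0 \<longleftrightarrow> P xs"
    using assms unfolding dec_def by blast
  have "comp (neg_p a) (\<lambda>xs. 1 - F xs)" unfolding neg_p_def by (rule ap2[OF comp_monus comp_const F(1)]) simp
  moreover have "1 - F xs = 0 \<longleftrightarrow> \<not> P xs" for xs using F(2)[of xs] by linarith
  ultimately show ?thesis unfolding dec_def by blast
qed

lemma dec_true: "dec Zero (\<lambda>_. True)"
  unfolding dec_def by (auto intro!: exI comp_Zero)

definition "imp_p a b = disj_p (neg_p a) b"
lemma dec_imp: "dec a P \<Longrightarrow> dec b Q \<Longrightarrow> dec (imp_p a b) (\<lambda>xs. P xs \<longrightarrow> Q xs)"
  unfolding imp_p_def by (rule dec_eq[OF dec_disj[OF dec_neg]]) auto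

definition "lt_p a b = Comp monus_p [Comp Succ [a], b]"
lemma dec_lt: assumes "comp a A" "comp b B" shows "dec (lt_p a b) (\<lambda>xs. A xs < B xs)"
  unfolding dec_def lt_p_def
  by (intro exI[of _ "\<lambda>xs. Suc (A xs) - B xs"] conjI ap2[OF comp_monus ap1[OF comp_Succ assms(1)] assms(2)]) auto

definition "bmin_p b p = Minim (Comp mult_p [Comp monus_p [b, Proj 0], p])"
lemma comp_bmin:
  assumes "comp b BB" "\<And>q xs. BB (q # xs) = B xs" "dec p P"
  shows "comp (bmin_p b p) (\<lambda>xs. LEAST q. B xs \<le> q \<or> P (q # xs))"
proof -
  obtain F where F: "comp p F" "\<And>xs. F xs = 0 \<longleftrightarrow> P xs" using assms(3) unfolding dec_def by blast
  have c: "comp (Comp mult_p [Comp monus_p [b, Proj 0], p]) (\<lambda>ys. (BB ys - arg 0 ys) * F ys)"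
    by (rule comp_eq[OF comp_Comp2[OF comp_mult comp_Comp2[OF comp_monus assms(1) comp_Proj] F(1)]]) simp
  have "comp (bmin_p b p) (\<lambda>xs. LEAST n. (BB (n # xs) - arg 0 (n # xs)) * F (n # xs) = 0)"
    unfolding bmin_p_def
    by (rule comp_Minim[OF c]) (use assms(2) in \<open>auto intro: exI[of _ "B xs" for xs]\<close>)
  then show ?thesis by (rule comp_eq) (simp add: assms(2) F(2))
qed

definition "ball_p b0 b p = Comp monus_p [b0, bmin_p b (neg_p p)]"
lemma dec_ball:
  assumes "comp b0 B" "comp b BB" "\<And>q xs. BB (q # xs) = B xs" "dec p P"
  shows "dec (ball_p b0 b p) (\<lambda>xs. \<forall>q < B xs. P (q # xs))"
proof -
  have c: "comp (ball_p b0 b p) (\<lambda>xs. B xs - (LEAST q. B xs \<le> q \<or> \<not> P (q # xs)))"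
    unfolding ball_p_def
    by (rule comp_eq[OF comp_Comp2[OF comp_monus assms(1) comp_bmin[OF assms(2,3) dec_neg[OF assms(4)]]]]) simp
  have "B xs - (LEAST q. B xs \<le> q \<or> \<not> P (q # xs)) = 0 \<longleftrightarrow> (\<forall>q < B xs. P (q # xs))" for xs
  proof
    assume h: "B xs - (LEAST q. B xs \<le> q \<or> \<not> P (q # xs)) = 0"
    show "\<forall>q < B xs. P (q # xs)"
    proof (intro allI impI, rule ccontr)
      fix q assume "q < B xs" "\<not> P (q # xs)"
      then have "(LEAST q. B xs \<le> q \<or> \<not> P (q # xs)) \<le> q" by (intro Least_le) auto
      then show False using h \<open>q < B xs\<close> by linarith
    qed
  next
    assume h: "\<forall>q < B xs. P (q # xs)"
    have "(LEAST q. B xs \<le> q \<or> \<not> P (q # xs)) = B xs"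
      by (rule Least_equality) (use h in \<open>auto simp: not_le[symmetric]\<close>)
    then show "B xs - (LEAST q. B xs \<le> q \<or> \<not> P (q # xs)) = 0" by simp
  qed
  then show ?thesis unfolding dec_def using c by blast
qed

definition "bex_p b0 b p = Comp monus_p [const_p 1, Comp monus_p [b0, bmin_p b p]]"
lemma dec_bex:
  assumes "comp b0 B" "comp b BB" "\<And>q xs. BB (q # xs) = B xs" "dec p P"
  shows "dec (bex_p b0 b p) (\<lambda>xs. \<exists>q < B xs. P (q # xs))"
proof -
  have c: "comp (bex_p b0 b p) (\<lambda>xs. 1 - (B xs - (LEAST q. B xs \<le> q \<or> P (q # xs))))"
    unfolding bex_p_def
    by (rule comp_eq[OF comp_Comp2[OF comp_monus comp_const comp_Comp2[OF comp_monus assms(1) comp_bmin[OF assms(2,3,4)]]]]) simp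
  have "1 - (B xs - (LEAST q. B xs \<le> q \<or> P (q # xs))) = 0 \<longleftrightarrow> (\<exists>q < B xs. P (q # xs))" for xs
  proof
    assume h: "1 - (B xs - (LEAST q. B xs \<le> q \<or> P (q # xs))) = 0"
    then have lt: "(LEAST q. B xs \<le> q \<or> P (q # xs)) < B xs" by linarith
    have "B xs \<le> (LEAST q. B xs \<le> q \<or> P (q # xs)) \<or> P ((LEAST q. B xs \<le> q \<or> P (q # xs)) # xs)"
      by (rule LeastI[of _ "B xs"]) simp
    then show "\<exists>q < B xs. P (q # xs)" using lt by auto
  next
    assume "\<exists>q < B xs. P (q # xs)"
    then obtain q where "q < B xs" "P (q # xs)" by blast
    then have "(LEAST q. B xs \<le> q \<or> P (q # xs)) \<le> q" by (intro Least_le) auto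
    then show "1 - (B xs - (LEAST q. B xs \<le> q \<or> P (q # xs))) = 0" using \<open>q < B xs\<close> by linarith
  qed
  then show ?thesis unfolding dec_def using c by blast
qed


lemma dec_min: assumes "dec p P" "\<And>xs. \<exists>q. P (q # xs)"
  shows "comp (Minim p) (\<lambda>xs. LEAST q. P (q # xs))"
proof -
  obtain F where F: "comp p F" "\<And>xs. F xs = 0 \<longleftrightarrow> P xs" using assms(1) unfolding dec_def by blast
  show ?thesis by (rule comp_eq[OF comp_Minim[OF F(1)]]) (use assms(2) F(2) in auto)
qed

lemma triangle_mono: "m \<le> n \<Longrightarrow> triangle m \<le> triangle n"
  by (induction n) (auto simp: le_Suc_eq)

lemma le_triangle: "n \<le> triangle n" by (induction n) auto

definition "sdiag x = (LEAST q. x \<le> q \<or> x < Suc (triangle q + q))"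

lemma sdiag_eq: "sdiag x = fst (prod_decode x) + snd (prod_decode x)"
proof -
  obtain a b where ab: "prod_decode x = (a, b)" by fastforce
  then have x: "x = triangle (a + b) + a" using prod_decode_inverse[of x] by (simp add: prod_encode_def)
  have "(LEAST q. x \<le> q \<or> x < Suc (triangle q + q)) = a + b"
  proof (rule Least_equality)
    show "x \<le> a + b \<or> x < Suc (triangle (a + b) + (a + b))" using x by simp
  next
    fix y assume h: "x \<le> y \<or> x < Suc (triangle y + y)"
    show "a + b \<le> y"
    proof (rule ccontr)
      assume "\<not> a + b \<le> y"
      then have "Suc y \<le> a + b" by simp
      then have "triangle (Suc y) \<le> triangle (a + b)" by (rule triangle_mono)
      moreover have "a + b \<le> x" using x le_triangle[of "a+b"] by linarith
      moreover have "\<not> x \<le> y" using \<open>Suc y \<le> a + b\<close> \<open>a + b \<le> x\<close> by linarith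
      ultimately show False using h x by simp
    qed
  qed
  then show ?thesis unfolding sdiag_def using ab by simp
qed

definition "sdiag_p = bmin_p (Proj 1) (lt_p (Proj 1) (Comp Succ [Comp add_p [Comp tri_p [Proj 0], Proj 0]]))"
lemma comp_sdiag: "comp sdiag_p (\<lambda>xs. sdiag (arg 0 xs))"
  unfolding sdiag_p_def sdiag_def
  by (rule comp_eq[OF comp_bmin[where B="\<lambda>xs. arg 0 xs", OF comp_Proj _ dec_lt[OF comp_Proj comp_Comp1[OF comp_Succ comp_Comp2[OF comp_add comp_Comp1[OF comp_tri comp_Proj] comp_Proj]]]]]) simp_all

definition "pfst_p = Comp monus_p [Proj 0, Comp tri_p [sdiag_p]]"
lemma comp_pfst: "comp pfst_p (\<lambda>xs. fst (prod_decode (arg 0 xs)))"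
proof -
  have "x - triangle (sdiag x) = fst (prod_decode x)" for x
  proof -
    obtain a b where ab: "prod_decode x = (a, b)" by fastforce
    then have x: "x = triangle (a + b) + a" using prod_decode_inverse[of x] by (simp add: prod_encode_def)
    show ?thesis using ab x by (simp add: sdiag_eq)
  qed
  then show ?thesis unfolding pfst_p_def
    by (intro comp_eq[OF comp_Comp2[OF comp_monus comp_Proj comp_Comp1[OF comp_tri comp_sdiag]]]) simp
qed

definition "psnd_p = Comp monus_p [sdiag_p, pfst_p]"
lemma comp_psnd: "comp psnd_p (\<lambda>xs. snd (prod_decode (arg 0 xs)))"
  unfolding psnd_p_def
  by (intro comp_eq[OF comp_Comp2[OF comp_monus comp_sdiag comp_pfst]]) (simp add: sdiag_eq)

definition "tlv L = snd (prod_decode (L - 1))"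
definition "tl_p = Comp psnd_p [Comp pred_p [Proj 0]]"
lemma comp_tl: "comp tl_p (\<lambda>xs. tlv (arg 0 xs))"
  unfolding tl_p_def tlv_def by (intro comp_eq[OF comp_Comp1[OF comp_psnd comp_Comp1[OF comp_pred comp_Proj]]]) simp

lemma rn_funpow: "rec_nat L (\<lambda>k y. f y) n = (f ^^ n) L" by (induction n) auto

definition "nthv L i = fst (prod_decode ((tlv ^^ i) L - 1))"
definition "nth_p = Comp pfst_p [Comp pred_p [Comp (PrimRec (Proj 0) (Comp tl_p [Proj 0])) [Proj 1, Proj 0]]]"
lemma comp_nth: "comp nth_p (\<lambda>xs. nthv (arg 0 xs) (arg 1 xs))"
  unfolding nth_p_def nthv_def
  by (intro comp_eq[OF comp_Comp1[OF comp_pfst comp_Comp1[OF comp_pred comp_PrimRec[OF comp_Proj comp_Comp1[OF comp_tl comp_Proj] comp_Proj comp_Proj]]]])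
    (simp add: rn_funpow)

lemma tlv_iter: "i \<le> length l \<Longrightarrow> (tlv ^^ i) (list_encode l) = list_encode (drop i l)"
proof (induction i)
  case 0 then show ?case by simp
next
  case (Suc i)
  then have "i < length l" by simp
  then have "drop i l = l ! i # drop (Suc i) l" by (simp add: Cons_nth_drop_Suc)
  then show ?case using Suc by (simp add: tlv_def)
qed

lemma nthv_encode: "i < length l \<Longrightarrow> nthv (list_encode l) i = l ! i"
proof -
  assume i: "i < length l"
  then have "drop i l = l ! i # drop (Suc i) l" by (simp add: Cons_nth_drop_Suc)
  then show ?thesis using i by (simp add: nthv_def tlv_iter)
qed


definition "Nc x = fst (prod_decode x)"
definition "LTc x = fst (prod_decode (snd (prod_decode x)))"
definition "LFc x = snd (prod_decode (snd (prod_decode x)))"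
definition "mulr x a b = nthv (LTc x) (a * Nc x + b)"
definition "er x = (LEAST e. Nc x \<le> e \<or> mulr x e e = e)"
definition "invr x a = (LEAST y. Nc x \<le> y \<or> mulr x a y = er x)"
definition "genr x i = nthv (LFc x) i"
definition "divv a b = (LEAST q. a \<le> q \<or> a < Suc q * b)"
definition "modv a b = a - b * divv a b"
definition "bitv S z = modv (divv S (2 ^ z)) 2"

definition "N_p = pfst_p"
lemma comp_N: "comp N_p (\<lambda>xs. Nc (arg 0 xs))"
  unfolding N_p_def Nc_def by (rule comp_pfst)

definition "LT_p = Comp pfst_p [Comp psnd_p [Proj 0]]"
lemma comp_LT: "comp LT_p (\<lambda>xs. LTc (arg 0 xs))"
  unfolding LT_p_def LTc_def by (rule comp_eq[OF comp_Comp1[OF comp_pfst comp_Comp1[OF comp_psnd comp_Proj]]]) simp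

definition "LF_p = Comp psnd_p [Comp psnd_p [Proj 0]]"
lemma comp_LF: "comp LF_p (\<lambda>xs. LFc (arg 0 xs))"
  unfolding LF_p_def LFc_def by (rule comp_eq[OF comp_Comp1[OF comp_psnd comp_Comp1[OF comp_psnd comp_Proj]]]) simp

definition "mul_p = Comp nth_p [Comp LT_p [Proj 0], Comp add_p [Comp mult_p [Proj 1, Comp N_p [Proj 0]], Proj 2]]"
lemma comp_mul: "comp mul_p (\<lambda>xs. mulr (arg 0 xs) (arg 1 xs) (arg 2 xs))"
  unfolding mul_p_def mulr_def
  by (rule comp_eq[OF comp_Comp2[OF comp_nth comp_Comp1[OF comp_LT comp_Proj]
      comp_Comp2[OF comp_add comp_Comp2[OF comp_mult comp_Proj comp_Comp1[OF comp_N comp_Proj]] comp_Proj]]]) simp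

definition "er_p = bmin_p (Comp N_p [Proj 1]) (eq_p (Comp mul_p [Proj 1, Proj 0, Proj 0]) (Proj 0))"
lemma comp_er: "comp er_p (\<lambda>xs. er (arg 0 xs))"
  unfolding er_p_def er_def
  by (rule comp_eq[OF comp_bmin[where B="\<lambda>xs. Nc (arg 0 xs)", OF comp_Comp1[OF comp_N comp_Proj] _
        dec_eqp[OF comp_Comp3[OF comp_mul comp_Proj comp_Proj comp_Proj] comp_Proj]]]) simp_all

definition "inv_p = bmin_p (Comp N_p [Proj 1]) (eq_p (Comp mul_p [Proj 1, Proj 2, Proj 0]) (Comp er_p [Proj 1]))"
lemma comp_inv: "comp inv_p (\<lambda>xs. invr (arg 0 xs) (arg 1 xs))"
  unfolding inv_p_def invr_def
  by (rule comp_eq[OF comp_bmin[where B="\<lambda>xs. Nc (arg 0 xs)", OF comp_Comp1[OF comp_N comp_Proj] _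
        dec_eqp[OF comp_Comp3[OF comp_mul comp_Proj comp_Proj comp_Proj] comp_Comp1[OF comp_er comp_Proj]]]]) simp_all

definition "gen_p = Comp nth_p [Comp LF_p [Proj 0], Proj 1]"
lemma comp_gen: "comp gen_p (\<lambda>xs. genr (arg 0 xs) (arg 1 xs))"
  unfolding gen_p_def genr_def
  by (rule comp_eq[OF comp_Comp2[OF comp_nth comp_Comp1[OF comp_LF comp_Proj] comp_Proj]]) simp

definition "div_p = bmin_p (Proj 1) (lt_p (Proj 1) (Comp mult_p [Comp Succ [Proj 0], Proj 2]))"
lemma comp_div: "comp div_p (\<lambda>xs. divv (arg 0 xs) (arg 1 xs))"
  unfolding div_p_def divv_def
  by (rule comp_eq[OF comp_bmin[where B="\<lambda>xs. arg 0 xs", OF comp_Proj _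
        dec_lt[OF comp_Proj comp_Comp2[OF comp_mult comp_Comp1[OF comp_Succ comp_Proj] comp_Proj]]]]) simp_all

definition "mod_p = Comp monus_p [Proj 0, Comp mult_p [Proj 1, div_p]]"
lemma comp_mod: "comp mod_p (\<lambda>xs. modv (arg 0 xs) (arg 1 xs))"
  unfolding mod_p_def modv_def
  by (rule comp_eq[OF comp_Comp2[OF comp_monus comp_Proj comp_Comp2[OF comp_mult comp_Proj comp_div]]]) simp

definition "bit_p = Comp mod_p [Comp div_p [Proj 0, Comp pow_p [const_p 2, Proj 1]], const_p 2]"
lemma comp_bit: "comp bit_p (\<lambda>xs. bitv (arg 0 xs) (arg 1 xs))"
  unfolding bit_p_def bitv_def
  by (rule comp_eq[OF comp_Comp2[OF comp_mod comp_Comp2[OF comp_div comp_Proj comp_Comp2[OF comp_pow comp_const comp_Proj]] comp_const]]) simp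

lemma divv_eq: "0 < b \<Longrightarrow> divv a b = a div b"
  unfolding divv_def
proof (rule Least_equality)
  assume b: "0 < b"
  have "a < (a div b + 1) * b" using b by (metis div_mult_mod_eq mod_less_divisor add_less_cancel_left distrib_right mult_1 add.commute)
  then show "a \<le> a div b \<or> a < Suc (a div b) * b" by simp
next
  fix y assume b: "0 < b" and h: "a \<le> y \<or> a < Suc y * b"
  from h show "a div b \<le> y"
  proof
    assume "a \<le> y" then show ?thesis using div_le_dividend order_trans by blast
  next
    assume "a < Suc y * b"
    then have "a div b < Suc y" by (simp add: less_mult_imp_div_less)
    then show ?thesis by simp
  qed
qed

lemma modv_eq: "0 < b \<Longrightarrow> modv a b = a mod b"
  by (simp add: modv_def divv_eq minus_mult_div_eq_mod)

lemma bitv_eq: "bitv S z = (S div 2 ^ z) mod 2"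
  by (simp add: bitv_def divv_eq modv_eq)

lemma bitv_01: "bitv S z = 1 \<or> bitv S z = 0"
  unfolding bitv_eq by presburger

lemma bits_exist: "\<exists>T. \<forall>z<n. (bitv T z = 1) = b z"
proof (induction n arbitrary: b)
  case 0 then show ?case by simp
next
  case (Suc n)
  obtain T' where T': "\<forall>z<n. (bitv T' z = 1) = b (Suc z)" using Suc[of "\<lambda>z. b (Suc z)"] by blast
  define T where "T = (if b 0 then 1 else 0) + 2 * T'"
  have "(bitv T z = 1) = b z" if "z < Suc n" for z
  proof (cases z)
    case 0 then show ?thesis by (simp add: bitv_eq T_def)
  next
    case (Suc z')
    have "T div 2 ^ z = T' div 2 ^ z'" unfolding Suc T_def
      by (simp add: div_mult2_eq[symmetric] mult.commute) (simp add: div_mult2_eq)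
    then show ?thesis using T' that Suc by (simp add: bitv_eq)
  qed
  then show ?case by blast
qed


lemma dec_Comp1: assumes "dec p P" "comp a A" shows "dec (Comp p [a]) (\<lambda>xs. P [A xs])"
proof -
  obtain F where F: "comp p F" "\<And>xs. F xs = 0 \<longleftrightarrow> P xs" using assms unfolding dec_def by blast
  show ?thesis unfolding dec_def by (rule exI[of _ "\<lambda>xs. F [A xs]"]) (use F comp_Comp1[OF F(1) assms(2)] in auto)
qed
lemma dec_Comp2: assumes "dec p P" "comp a A" "comp b B" shows "dec (Comp p [a, b]) (\<lambda>xs. P [A xs, B xs])"
proof -
  obtain F where F: "comp p F" "\<And>xs. F xs = 0 \<longleftrightarrow> P xs" using assms unfolding dec_def by blast
  show ?thesis unfolding dec_def by (rule exI[of _ "\<lambda>xs. F [A xs, B xs]"]) (use F comp_Comp2[OF F(1) assms(2,3)] in auto)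
qed
lemma dec_Comp3: assumes "dec p P" "comp a A" "comp b B" "comp c C" shows "dec (Comp p [a, b, c]) (\<lambda>xs. P [A xs, B xs, C xs])"
proof -
  obtain F where F: "comp p F" "\<And>xs. F xs = 0 \<longleftrightarrow> P xs" using assms unfolding dec_def by blast
  show ?thesis unfolding dec_def by (rule exI[of _ "\<lambda>xs. F [A xs, B xs, C xs]"]) (use F comp_Comp3[OF F(1) assms(2,3,4)] in auto)
qed

definition "iff_p a b = conj_p (imp_p a b) (imp_p b a)"
lemma dec_iff: "dec a P \<Longrightarrow> dec b Q \<Longrightarrow> dec (iff_p a b) (\<lambda>xs. P xs \<longleftrightarrow> Q xs)"
  unfolding iff_p_def by (rule dec_eq[OF dec_conj[OF dec_imp dec_imp]]) auto

definition "nbr k0 x S z = (bitv S z = 1 \<or> (\<exists>y < Nc x. bitv S y = 1 \<and>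
   (\<exists>i < k0. z = mulr x y (genr x i) \<or> z = mulr x y (invr x (genr x i)))))"
definition "stepr k0 x S = (LEAST T. \<forall>z<Nc x. (bitv T z = 1) = nbr k0 x S z)"
definition "S0r x = (LEAST T. \<forall>z<Nc x. (bitv T z = 1) = (z = er x))"
definition "Sfin k0 x = (stepr k0 x ^^ Nc x) (S0r x)"
definition "memr k0 x z = (bitv (Sfin k0 x) z = 1)"
definition "digit n q i = modv (divv q (n ^ i)) n"
definition "wev x w g = foldr (\<lambda>(i, b) y. mulr x (if b then invr x (g i) else g i) y) w (er x)"

definition "nb_p k0 =
  disj_p (eq_p (Comp bit_p [Proj 1, Proj 2]) (const_p 1))
    (bex_p (Comp N_p [Proj 0]) (Comp N_p [Proj 1])
       (conj_p (eq_p (Comp bit_p [Proj 2, Proj 0]) (const_p 1))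
               (bex_p (const_p k0) (const_p k0)
                  (disj_p (eq_p (Proj 4) (Comp mul_p [Proj 2, Proj 1, Comp gen_p [Proj 2, Proj 0]]))
                          (eq_p (Proj 4) (Comp mul_p [Proj 2, Proj 1, Comp inv_p [Proj 2, Comp gen_p [Proj 2, Proj 0]]]))))))"

lemma dec_nb: "dec (nb_p k0) (\<lambda>xs. nbr k0 (arg 0 xs) (arg 1 xs) (arg 2 xs))"
  unfolding nb_p_def
  apply (rule dec_eq)
   apply (rule dec_disj[OF dec_eqp[OF comp_Comp2[OF comp_bit comp_Proj comp_Proj] comp_const]
     dec_bex[OF comp_Comp1[OF comp_N comp_Proj] comp_Comp1[OF comp_N comp_Proj] _
       dec_conj[OF dec_eqp[OF comp_Comp2[OF comp_bit comp_Proj comp_Proj] comp_const]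
         dec_bex[OF comp_const comp_const _
           dec_disj[OF dec_eqp[OF comp_Proj comp_Comp3[OF comp_mul comp_Proj comp_Proj comp_Comp2[OF comp_gen comp_Proj comp_Proj]]]
                       dec_eqp[OF comp_Proj comp_Comp3[OF comp_mul comp_Proj comp_Proj comp_Comp2[OF comp_inv comp_Proj comp_Comp2[OF comp_gen comp_Proj comp_Proj]]]]]]]]])
  by (simp_all add: nbr_def)

definition "step_p k0 = Minim (ball_p (Comp N_p [Proj 1]) (Comp N_p [Proj 2])
   (iff_p (eq_p (Comp bit_p [Proj 1, Proj 0]) (const_p 1)) (Comp (nb_p k0) [Proj 2, Proj 3, Proj 0])))"

lemma comp_step: "comp (step_p k0) (\<lambda>xs. stepr k0 (arg 0 xs) (arg 1 xs))"
  unfolding step_p_def stepr_def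
  apply (rule comp_eq[OF dec_min])
    apply (rule dec_ball[OF comp_Comp1[OF comp_N comp_Proj] comp_Comp1[OF comp_N comp_Proj] _
      dec_iff[OF dec_eqp[OF comp_Comp2[OF comp_bit comp_Proj comp_Proj] comp_const]
                 dec_Comp3[OF dec_nb comp_Proj comp_Proj comp_Proj]]])
   apply simp
  using bits_exist apply simp
  by simp

definition "S0_p = Minim (ball_p (Comp N_p [Proj 1]) (Comp N_p [Proj 2])
   (iff_p (eq_p (Comp bit_p [Proj 1, Proj 0]) (const_p 1)) (eq_p (Proj 0) (Comp er_p [Proj 2]))))"

lemma comp_S0: "comp S0_p (\<lambda>xs. S0r (arg 0 xs))"
  unfolding S0_p_def S0r_def
  apply (rule comp_eq[OF dec_min])
    apply (rule dec_ball[OF comp_Comp1[OF comp_N comp_Proj] comp_Comp1[OF comp_N comp_Proj] _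
      dec_iff[OF dec_eqp[OF comp_Comp2[OF comp_bit comp_Proj comp_Proj] comp_const]
                 dec_eqp[OF comp_Proj comp_Comp1[OF comp_er comp_Proj]]]])
   apply simp
  using bits_exist apply simp
  by simp

definition "Sfin_p k0 = Comp (PrimRec S0_p (Comp (step_p k0) [Proj 2, Proj 0])) [N_p, Proj 0]"
lemma comp_Sfin: "comp (Sfin_p k0) (\<lambda>xs. Sfin k0 (arg 0 xs))"
  unfolding Sfin_p_def Sfin_def
  by (rule comp_eq[OF comp_PrimRec[OF comp_S0 comp_Comp2[OF comp_step comp_Proj comp_Proj] comp_N comp_Proj]])
    (simp add: rn_funpow)

definition "mem_p k0 = eq_p (Comp bit_p [Comp (Sfin_p k0) [Proj 0], Proj 1]) (const_p 1)"
lemma dec_mem: "dec (mem_p k0) (\<lambda>xs. memr k0 (arg 0 xs) (arg 1 xs))"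
  unfolding mem_p_def memr_def
  by (rule dec_eq[OF dec_eqp[OF comp_Comp2[OF comp_bit comp_Comp1[OF comp_Sfin comp_Proj] comp_Proj] comp_const]]) simp

definition "digit_p = Comp mod_p [Comp div_p [Proj 1, Comp pow_p [Proj 0, Proj 2]], Proj 0]"
lemma comp_digit: "comp digit_p (\<lambda>xs. digit (arg 0 xs) (arg 1 xs) (arg 2 xs))"
  unfolding digit_p_def digit_def
  by (rule comp_eq[OF comp_Comp2[OF comp_mod comp_Comp2[OF comp_div comp_Proj comp_Comp2[OF comp_pow comp_Proj comp_Proj]] comp_Proj]]) simp

fun wprog :: "(nat \<Rightarrow> recf) \<Rightarrow> recf \<Rightarrow> (nat \<times> bool) list \<Rightarrow> recf" where
  "wprog vp xp [] = Comp er_p [xp]"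
| "wprog vp xp ((i, b) # w) = Comp mul_p [xp, (if b then Comp inv_p [xp, vp i] else vp i), wprog vp xp w]"

lemma comp_wprog: assumes "comp xp Xf" "\<And>i. comp (vp i) (Vf i)"
  shows "comp (wprog vp xp w) (\<lambda>xs. wev (Xf xs) w (\<lambda>i. Vf i xs))"
proof (induction w)
  case Nil then show ?case unfolding wev_def by (simp, rule comp_eq[OF comp_Comp1[OF comp_er assms(1)]]) simp
next
  case (Cons a w)
  obtain i b where a: "a = (i, b)" by fastforce
  show ?case
  proof (cases b)
    case True
    have eq: "wprog vp xp (a # w) = Comp mul_p [xp, Comp inv_p [xp, vp i], wprog vp xp w]" using a True by simp
    show ?thesis unfolding eq
      by (rule comp_eq[OF comp_Comp3[OF comp_mul assms(1) comp_Comp2[OF comp_inv assms(1) assms(2)] Cons]]) (simp add: wev_def a True)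
  next
    case False
    have eq: "wprog vp xp (a # w) = Comp mul_p [xp, vp i, wprog vp xp w]" using a False by simp
    show ?thesis unfolding eq
      by (rule comp_eq[OF comp_Comp3[OF comp_mul assms(1) assms(2) Cons]]) (simp add: wev_def a False)
  qed
qed

fun allp :: "recf list \<Rightarrow> recf" where
  "allp [] = Zero" | "allp (p # ps) = conj_p p (allp ps)"

lemma dec_allp: "(\<And>a. a \<in> set L \<Longrightarrow> dec (f a) (P a)) \<Longrightarrow> dec (allp (map f L)) (\<lambda>xs. \<forall>a\<in>set L. P a xs)"
proof (induction L)
  case Nil then show ?case by (simp add: dec_true)
next
  case (Cons a L)
  have "dec (allp (map f (a # L))) (\<lambda>xs. P a xs \<and> (\<forall>a\<in>set L. P a xs))"
    using dec_conj[OF Cons.prems[of a] Cons.IH] Cons.prems by simp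
  then show ?case by (rule dec_eq) simp
qed

definition "p1_p w = eq_p (wprog (\<lambda>i. Comp gen_p [Proj 0, const_p i]) (Proj 0) w) (Comp er_p [Proj 0])"
lemma dec_p1: "dec (p1_p w) (\<lambda>xs. wev (arg 0 xs) w (genr (arg 0 xs)) = er (arg 0 xs))"
  unfolding p1_p_def
  by (rule dec_eq[OF dec_eqp[OF comp_wprog[OF comp_Proj comp_Comp2[OF comp_gen comp_Proj comp_const]] comp_Comp1[OF comp_er comp_Proj]]]) simp

definition "p2_p k0 kw = (case kw of (k, w) \<Rightarrow>
  ball_p (Comp pow_p [Comp N_p [Proj 0], const_p k]) (Comp pow_p [Comp N_p [Proj 1], const_p k])
   (imp_p (ball_p (const_p k) (const_p k) (Comp (mem_p k0) [Proj 2, Comp digit_p [Comp N_p [Proj 2], Proj 1, Proj 0]]))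
          (eq_p (wprog (\<lambda>i. Comp digit_p [Comp N_p [Proj 1], Proj 0, const_p i]) (Proj 1) w) (Comp er_p [Proj 1]))))"

lemma dec_p2: "dec (p2_p k0 (k, w)) (\<lambda>xs. \<forall>q < Nc (arg 0 xs) ^ k. (\<forall>i<k. memr k0 (arg 0 xs) (digit (Nc (arg 0 xs)) q i)) \<longrightarrow>
      wev (arg 0 xs) w (digit (Nc (arg 0 xs)) q) = er (arg 0 xs))"
  unfolding p2_p_def
  apply (rule dec_eq)
   apply (simp only: prod.case)
   apply (rule dec_ball[OF comp_Comp2[OF comp_pow comp_Comp1[OF comp_N comp_Proj] comp_const]
     comp_Comp2[OF comp_pow comp_Comp1[OF comp_N comp_Proj] comp_const] _
     dec_imp[OF dec_ball[OF comp_const comp_const _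
        dec_Comp2[OF dec_mem comp_Proj comp_Comp3[OF comp_digit comp_Comp1[OF comp_N comp_Proj] comp_Proj comp_Proj]]]
       dec_eqp[OF comp_wprog[OF comp_Proj comp_Comp3[OF comp_digit comp_Comp1[OF comp_N comp_Proj] comp_Proj comp_const]] comp_Comp1[OF comp_er comp_Proj]]]])
  by simp_all

definition "Praw rws vs k0 x \<longleftrightarrow> (\<forall>w\<in>set rws. wev x w (genr x) = er x) \<and>
   (\<forall>(k, w)\<in>set vs. \<forall>q < Nc x ^ k. (\<forall>i<k. memr k0 x (digit (Nc x) q i)) \<longrightarrow> wev x w (digit (Nc x) q) = er x)"

definition "P_p rws vs k0 = conj_p (allp (map p1_p rws)) (allp (map (p2_p k0) vs))"
lemma dec_P: "dec (P_p rws vs k0) (\<lambda>xs. Praw rws vs k0 (arg 0 xs))"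
  unfolding P_p_def Praw_def
  by (rule dec_eq[OF dec_conj[OF dec_allp[OF dec_p1] dec_allp]]) (auto intro: dec_p2)


lemma word_eval_Nil[simp]: "word_eval G [] g = \<one>\<^bsub>G\<^esub>" by (simp add: word_eval_def)
lemma word_eval_Cons[simp]: "word_eval G ((i, b) # w) g = (if b then inv\<^bsub>G\<^esub> (g i) else g i) \<otimes>\<^bsub>G\<^esub> word_eval G w g"
  by (simp add: word_eval_def)

lemma (in group) word_eval_closed: "(\<forall>(i, b)\<in>set w. g i \<in> carrier G) \<Longrightarrow> word_eval G w g \<in> carrier G"
  by (induction w) auto

lemma word_eval_cong: "(\<forall>(i, b)\<in>set w. g i = g' i) \<Longrightarrow> word_eval G w g = word_eval G w g'"
  by (induction w) auto

section \<open>Table semantics\<close>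

lemma tbl_carrier[simp]: "carrier (tbl_grp n tab) = {..<n}" by (simp add: tbl_grp_def)
lemma tbl_mult_eq: "x \<otimes>\<^bsub>tbl_grp n tab\<^esub> y = tab ! (x * n + y)" by (simp add: tbl_grp_def tbl_mult_def)

lemma code_N[simp]: "Nc (code n tab fl) = n" by (simp add: Nc_def code_def)
lemma code_LT[simp]: "LTc (code n tab fl) = list_encode tab" by (simp add: LTc_def code_def)
lemma code_LF[simp]: "LFc (code n tab fl) = list_encode fl" by (simp add: LFc_def code_def)

lemma idx_bound: "a < (n::nat) \<Longrightarrow> b < n \<Longrightarrow> a * n + b < n * n"
proof -
  assume "a < n" "b < n"
  then have "a * n + b < a * n + n" by simp
  also have "\<dots> = Suc a * n" by simp
  also have "\<dots> \<le> n * n" using \<open>a < n\<close> by (intro mult_le_mono1) simp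
  finally show ?thesis .
qed

context
  fixes k0 n tab fl
  assumes V: "valid_marked k0 n tab fl"
begin

interpretation F: group "tbl_grp n tab" using V by (simp add: valid_marked_def)

lemma V_len: "length tab = n * n" "length fl = k0" "\<forall>x\<in>set fl. x < n"
  using V by (auto simp: valid_marked_def)

lemma mulr_tbl: "a < n \<Longrightarrow> b < n \<Longrightarrow> mulr (code n tab fl) a b = a \<otimes>\<^bsub>tbl_grp n tab\<^esub> b"
  by (simp add: mulr_def nthv_encode V_len idx_bound tbl_mult_eq)

lemma one_lt: "\<one>\<^bsub>tbl_grp n tab\<^esub> < n" using F.one_closed by simp

lemma er_tbl: "er (code n tab fl) = \<one>\<^bsub>tbl_grp n tab\<^esub>"
  unfolding er_def
proof (rule Least_equality)
  show "Nc (code n tab fl) \<le> \<one>\<^bsub>tbl_grp n tab\<^esub> \<or>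
    mulr (code n tab fl) \<one>\<^bsub>tbl_grp n tab\<^esub> \<one>\<^bsub>tbl_grp n tab\<^esub> = \<one>\<^bsub>tbl_grp n tab\<^esub>"
    using one_lt by (simp add: mulr_tbl)
next
  fix y assume h: "Nc (code n tab fl) \<le> y \<or> mulr (code n tab fl) y y = y"
  show "\<one>\<^bsub>tbl_grp n tab\<^esub> \<le> y"
  proof (cases "y < n")
    case True
    then have "y \<otimes>\<^bsub>tbl_grp n tab\<^esub> y = y" using h by (simp add: mulr_tbl)
    then have "y = \<one>\<^bsub>tbl_grp n tab\<^esub>" using True F.l_cancel_one[of y y] by simp
    then show ?thesis by simp
  next
    case False then show ?thesis using one_lt by simp
  qed
qed

lemma invr_tbl: "a < n \<Longrightarrow> invr (code n tab fl) a = inv\<^bsub>tbl_grp n tab\<^esub> a"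
  unfolding invr_def
proof (rule Least_equality)
  assume a: "a < n"
  have "inv\<^bsub>tbl_grp n tab\<^esub> a < n" using F.inv_closed[of a] a by simp
  then show "Nc (code n tab fl) \<le> inv\<^bsub>tbl_grp n tab\<^esub> a \<or>
    mulr (code n tab fl) a (inv\<^bsub>tbl_grp n tab\<^esub> a) = er (code n tab fl)"
    using a by (simp add: mulr_tbl er_tbl)
next
  fix y assume a: "a < n" and h: "Nc (code n tab fl) \<le> y \<or> mulr (code n tab fl) a y = er (code n tab fl)"
  show "inv\<^bsub>tbl_grp n tab\<^esub> a \<le> y"
  proof (cases "y < n")
    case True
    then have "a \<otimes>\<^bsub>tbl_grp n tab\<^esub> y = \<one>\<^bsub>tbl_grp n tab\<^esub>" using h a by (simp add: mulr_tbl er_tbl)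
    then have "inv\<^bsub>tbl_grp n tab\<^esub> y = a" using True a by (intro F.inv_equality) auto
    then have "y = inv\<^bsub>tbl_grp n tab\<^esub> a" using True F.inv_inv[of y] by simp
    then show ?thesis by simp
  next
    case False
    have "inv\<^bsub>tbl_grp n tab\<^esub> a < n" using F.inv_closed[of a] a by simp
    then show ?thesis using False by simp
  qed
qed

lemma genr_tbl: "i < k0 \<Longrightarrow> genr (code n tab fl) i = fl ! i"
  by (simp add: genr_def nthv_encode V_len)

lemma wev_tbl: "(\<forall>(i, b)\<in>set w. g i < n) \<Longrightarrow> wev (code n tab fl) w g = word_eval (tbl_grp n tab) w g"
proof (induction w)
  case Nil then show ?case by (simp add: wev_def er_tbl)
next
  case (Cons a w)
  obtain i b where a: "a = (i, b)" by fastforce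
  have gi: "g i < n" using Cons.prems a by auto
  have r: "wev (code n tab fl) w g = word_eval (tbl_grp n tab) w g" using Cons by auto
  have wc: "word_eval (tbl_grp n tab) w g < n"
  proof -
    have "\<forall>(i, b)\<in>set w. g i \<in> carrier (tbl_grp n tab)" using Cons.prems by auto
    then have "word_eval (tbl_grp n tab) w g \<in> carrier (tbl_grp n tab)"
      by (rule F.word_eval_closed)
    then show ?thesis by simp
  qed
  have iv: "inv\<^bsub>tbl_grp n tab\<^esub> g i < n" using F.inv_closed[of "g i"] gi by simp
  have "wev (code n tab fl) (a # w) g = mulr (code n tab fl) (if b then invr (code n tab fl) (g i) else g i) (wev (code n tab fl) w g)"
    by (simp add: wev_def a)
  also have "\<dots> = (if b then inv\<^bsub>tbl_grp n tab\<^esub> (g i) else g i) \<otimes>\<^bsub>tbl_grp n tab\<^esub> word_eval (tbl_grp n tab) w g"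
    using gi iv wc r by (simp add: invr_tbl mulr_tbl)
  also have "\<dots> = word_eval (tbl_grp n tab) (a # w) g" by (simp add: a)
  finally show ?case .
qed

end


definition nxt :: "('a, 'b) monoid_scheme \<Rightarrow> 'a set \<Rightarrow> 'a set \<Rightarrow> 'a set" where
  "nxt G Gs A = A \<union> {y \<otimes>\<^bsub>G\<^esub> g | y g. y \<in> A \<and> (g \<in> Gs \<or> g \<in> m_inv G ` Gs)}"

context group begin

lemma nxt_mono: "A \<subseteq> nxt G Gs A" by (auto simp: nxt_def)

lemma iter_mono: "(nxt G Gs ^^ t) A \<subseteq> (nxt G Gs ^^ (t + j)) A"
proof (induction j)
  case 0 then show ?case by simp
next
  case (Suc j)
  have "(nxt G Gs ^^ (t + j)) A \<subseteq> nxt G Gs ((nxt G Gs ^^ (t + j)) A)" by (rule nxt_mono)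
  then show ?case using Suc by auto
qed

lemma nxt_gen: "Gs \<subseteq> carrier G \<Longrightarrow> A \<subseteq> generate G Gs \<Longrightarrow> nxt G Gs A \<subseteq> generate G Gs"
  unfolding nxt_def
  by (auto intro: generate.eng generate.incl generate.inv)

lemma iter_gen: "Gs \<subseteq> carrier G \<Longrightarrow> (nxt G Gs ^^ t) {\<one>} \<subseteq> generate G Gs"
  by (induction t) (auto intro: generate.one dest: nxt_gen)

lemma gen_sub_fix:
  assumes Gs: "Gs \<subseteq> carrier G" and one: "\<one> \<in> A" and Ac: "A \<subseteq> carrier G" and fx: "nxt G Gs A \<subseteq> A"
  shows "generate G Gs \<subseteq> A"
proof -
  have "\<forall>b\<in>A. b \<otimes> a \<in> A" if "a \<in> generate G Gs" for a
    using that
  proof (induction rule: generate.induct)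
    case one then show ?case using Ac by auto
  next
    case (incl h) then show ?case using fx unfolding nxt_def by blast
  next
    case (inv h) then show ?case using fx unfolding nxt_def by blast
  next
    case (eng h1 h2)
    have c: "h1 \<in> carrier G" "h2 \<in> carrier G" using eng.hyps generate_in_carrier[OF Gs] by auto
    show ?case
    proof
      fix b assume b: "b \<in> A"
      then have "b \<otimes> h1 \<in> A" using eng.IH(1) by blast
      then have "(b \<otimes> h1) \<otimes> h2 \<in> A" using eng.IH(2) by blast
      then show "b \<otimes> (h1 \<otimes> h2) \<in> A" using b Ac c by (simp add: m_assoc subset_iff)
    qed
  qed
  show ?thesis
  proof
    fix a assume a: "a \<in> generate G Gs"
    then have "\<one> \<otimes> a \<in> A" using \<open>\<And>a. a \<in> generate G Gs \<Longrightarrow> \<forall>b\<in>A. b \<otimes> a \<in> A\<close> one by blast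
    then show "a \<in> A" using generate_in_carrier[OF Gs a] by simp
  qed
qed

lemma iter_stable_from: "(nxt G Gs ^^ Suc t) A = (nxt G Gs ^^ t) A \<Longrightarrow> (nxt G Gs ^^ (t + j)) A = (nxt G Gs ^^ t) A"
  by (induction j) auto

lemma iter_card:
  assumes fin: "finite (carrier G)" and Gs: "Gs \<subseteq> carrier G"
    and ne: "(nxt G Gs ^^ Suc c) {\<one>} \<noteq> (nxt G Gs ^^ c) {\<one>}"
  shows "t \<le> Suc c \<Longrightarrow> Suc t \<le> card ((nxt G Gs ^^ t) {\<one>})"
proof (induction t)
  case 0 then show ?case by simp
next
  case (Suc t)
  have sub: "(nxt G Gs ^^ t) {\<one>} \<subseteq> (nxt G Gs ^^ Suc t) {\<one>}" using iter_mono[where Gs=Gs and t=t and j=1 and A="{\<one>}"] by simp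
  have neq: "(nxt G Gs ^^ Suc t) {\<one>} \<noteq> (nxt G Gs ^^ t) {\<one>}"
  proof
    assume "(nxt G Gs ^^ Suc t) {\<one>} = (nxt G Gs ^^ t) {\<one>}"
    then have "(nxt G Gs ^^ (t + j)) {\<one>} = (nxt G Gs ^^ t) {\<one>}" for j by (rule iter_stable_from)
    from this[of "c - t"] this[of "Suc c - t"] have "(nxt G Gs ^^ Suc c) {\<one>} = (nxt G Gs ^^ c) {\<one>}"
      using Suc.prems by (simp add: Suc_diff_le)
    then show False using ne by simp
  qed
  have fin2: "finite ((nxt G Gs ^^ Suc t) {\<one>})"
    using iter_gen[OF Gs, of "Suc t"] generate_incl[OF Gs] fin by (meson finite_subset subset_trans)
  have "card ((nxt G Gs ^^ t) {\<one>}) < card ((nxt G Gs ^^ Suc t) {\<one>})"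
    using sub neq fin2 by (intro psubset_card_mono) auto
  then show ?case using Suc by simp
qed

lemma iter_eq_gen:
  assumes fin: "finite (carrier G)" and Gs: "Gs \<subseteq> carrier G"
  shows "(nxt G Gs ^^ card (carrier G)) {\<one>} = generate G Gs"
proof -
  let ?c = "card (carrier G)"
  have stab: "(nxt G Gs ^^ Suc ?c) {\<one>} = (nxt G Gs ^^ ?c) {\<one>}"
  proof (rule ccontr)
    assume ne: "\<not> ?thesis"
    have "Suc (Suc ?c) \<le> card ((nxt G Gs ^^ Suc ?c) {\<one>})" using iter_card[OF fin Gs ne, of "Suc ?c"] by simp
    moreover have "card ((nxt G Gs ^^ Suc ?c) {\<one>}) \<le> ?c"
      using iter_gen[OF Gs, of "Suc ?c"] generate_incl[OF Gs] fin by (meson card_mono subset_trans)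
    ultimately show False by simp
  qed
  show ?thesis
  proof
    show "(nxt G Gs ^^ ?c) {\<one>} \<subseteq> generate G Gs" by (rule iter_gen[OF Gs])
  next
    have one: "\<one> \<in> (nxt G Gs ^^ ?c) {\<one>}" using iter_mono[where Gs=Gs and t=0 and j="?c" and A="{\<one>}"] by auto
    have Ac: "(nxt G Gs ^^ ?c) {\<one>} \<subseteq> carrier G" using iter_gen[OF Gs] generate_incl[OF Gs] by blast
    show "generate G Gs \<subseteq> (nxt G Gs ^^ ?c) {\<one>}"
      by (rule gen_sub_fix[OF Gs one Ac]) (use stab in simp)
  qed
qed

end

definition "Aset n S = {z. z < n \<and> bitv S z = 1}"

context
  fixes k0 n tab fl
  assumes V: "valid_marked k0 n tab fl"
begin

interpretation F: group "tbl_grp n tab" using V by (simp add: valid_marked_def)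

lemma S0_set: "Aset n (S0r (code n tab fl)) = {\<one>\<^bsub>tbl_grp n tab\<^esub>}"
proof -
  let ?x = "code n tab fl"
  have "\<forall>z<Nc ?x. (bitv (S0r ?x) z = 1) = (z = er ?x)"
    unfolding S0r_def by (rule LeastI_ex) (rule bits_exist)
  then show ?thesis using one_lt[OF V] by (auto simp: Aset_def er_tbl[OF V])
qed

lemma step_set: "Aset n (stepr k0 (code n tab fl) S) = nxt (tbl_grp n tab) (set fl) (Aset n S)"
proof -
  let ?x = "code n tab fl"
  let ?F = "tbl_grp n tab"
  have st: "\<forall>z<Nc ?x. (bitv (stepr k0 ?x S) z = 1) = nbr k0 ?x S z"
    unfolding stepr_def by (rule LeastI_ex) (rule bits_exist)
  have fl: "length fl = k0" "\<forall>x\<in>set fl. x < n" using V_len[OF V] by auto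
  have nb: "nbr k0 ?x S z \<longleftrightarrow> z \<in> nxt ?F (set fl) (Aset n S)" if z: "z < n" for z
  proof
    assume "nbr k0 ?x S z"
    then consider "bitv S z = 1" | y i where "y < n" "bitv S y = 1" "i < k0"
        "z = mulr ?x y (genr ?x i) \<or> z = mulr ?x y (invr ?x (genr ?x i))"
      unfolding nbr_def by auto
    then show "z \<in> nxt ?F (set fl) (Aset n S)"
    proof cases
      case 1 then show ?thesis using z by (simp add: nxt_def Aset_def)
    next
      case 2
      have gi: "genr ?x i = fl ! i" "fl ! i < n" "fl ! i \<in> set fl" using 2 fl genr_tbl[OF V] by auto
      have "z = y \<otimes>\<^bsub>?F\<^esub> (fl ! i) \<or> z = y \<otimes>\<^bsub>?F\<^esub> inv\<^bsub>?F\<^esub> (fl ! i)"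
        using 2 gi F.inv_closed[of "fl ! i"] by (simp add: mulr_tbl[OF V] invr_tbl[OF V])
      then show ?thesis using 2 gi unfolding nxt_def Aset_def by blast
    qed
  next
    assume "z \<in> nxt ?F (set fl) (Aset n S)"
    then consider "z \<in> Aset n S" | y g where "y \<in> Aset n S" "g \<in> set fl \<or> g \<in> m_inv ?F ` set fl" "z = y \<otimes>\<^bsub>?F\<^esub> g"
      unfolding nxt_def by blast
    then show "nbr k0 ?x S z"
    proof cases
      case 1 then show ?thesis by (simp add: nbr_def Aset_def)
    next
      case 2
      then have y: "y < n" "bitv S y = 1" by (auto simp: Aset_def)
      from 2(2) obtain i where i: "i < k0" "g = fl ! i \<or> g = inv\<^bsub>?F\<^esub> (fl ! i)"
        using fl(1) by (auto simp: in_set_conv_nth)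
      have fi: "fl ! i < n" using i fl by auto
      have "z = mulr ?x y (genr ?x i) \<or> z = mulr ?x y (invr ?x (genr ?x i))"
        using i fi y 2(3) F.inv_closed[of "fl ! i"] by (auto simp: mulr_tbl[OF V] invr_tbl[OF V] genr_tbl[OF V])
      then show ?thesis unfolding nbr_def code_N using y i by blast
    qed
  qed
  have sub: "nxt ?F (set fl) (Aset n S) \<subseteq> {..<n}"
    using fl(2) unfolding nxt_def Aset_def by (auto intro!: F.m_closed[simplified] simp: F.inv_closed[simplified])
  have "z \<in> Aset n (stepr k0 ?x S) \<longleftrightarrow> z \<in> nxt ?F (set fl) (Aset n S)" for z
    using st nb sub by (auto simp: Aset_def)
  then show ?thesis by blast
qed

lemma Sfin_set: "Aset n (Sfin k0 (code n tab fl)) = generate (tbl_grp n tab) (set fl)"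
proof -
  have "Aset n ((stepr k0 (code n tab fl) ^^ t) (S0r (code n tab fl))) = (nxt (tbl_grp n tab) (set fl) ^^ t) {\<one>\<^bsub>tbl_grp n tab\<^esub>}" for t
    by (induction t) (simp_all add: S0_set step_set)
  moreover have "(nxt (tbl_grp n tab) (set fl) ^^ n) {\<one>\<^bsub>tbl_grp n tab\<^esub>} = generate (tbl_grp n tab) (set fl)"
    using F.iter_eq_gen[of "set fl"] V_len[OF V] by auto
  ultimately show ?thesis by (simp add: Sfin_def)
qed

lemma memr_tbl: "z < n \<Longrightarrow> memr k0 (code n tab fl) z \<longleftrightarrow> z \<in> generate (tbl_grp n tab) (set fl)"
  using Sfin_set by (auto simp: memr_def Aset_def)

end


lemma digits_exist: "0 < (n::nat) \<Longrightarrow> (\<forall>i<k. m i < n) \<Longrightarrow> \<exists>q < n ^ k. \<forall>i<k. q div n ^ i mod n = m i"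
proof (induction k arbitrary: m)
  case 0 then show ?case by simp
next
  case (Suc k)
  obtain q' where q': "q' < n ^ k" "\<forall>i<k. q' div n ^ i mod n = m (Suc i)"
    using Suc.IH[of "\<lambda>i. m (Suc i)"] Suc.prems by auto
  define q where "q = m 0 + n * q'"
  have m0: "m 0 < n" using Suc.prems by auto
  have "q < n + n * q'" using m0 by (simp add: q_def)
  also have "\<dots> = n * Suc q'" by simp
  also have "\<dots> \<le> n * n ^ k" using q' by (intro mult_le_mono2) simp
  finally have qb: "q < n ^ Suc k" by simp
  have "q div n ^ i mod n = m i" if "i < Suc k" for i
  proof (cases i)
    case 0 then show ?thesis using m0 by (simp add: q_def)
  next
    case (Suc j)
    have "q div n ^ i = (q div n) div n ^ j" by (simp add: Suc div_mult2_eq)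
    also have "q div n = q'" using m0 Suc.prems(1) by (simp add: q_def)
    finally show ?thesis using q' that Suc by simp
  qed
  then show ?case using qb by blast
qed

lemma digit_eq: "0 < n \<Longrightarrow> digit n q i = q div n ^ i mod n"
  by (simp add: digit_def divv_eq modv_eq)

definition Pmath :: "('a, 'b) monoid_scheme \<Rightarrow> 'a list \<Rightarrow> (nat \<times> bool) list list \<Rightarrow> (nat \<times> (nat \<times> bool) list) list \<Rightarrow> bool" where
  "Pmath F fl rws vs \<longleftrightarrow> (\<forall>w\<in>set rws. word_eval F w (\<lambda>i. fl ! i) = \<one>\<^bsub>F\<^esub>) \<and>
     (\<forall>(k, w)\<in>set vs. \<forall>m. (\<forall>i<k. m i \<in> generate F (set fl)) \<longrightarrow> word_eval F w m = \<one>\<^bsub>F\<^esub>)"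

lemma Praw_tbl:
  assumes V: "valid_marked k0 n tab fl"
    and R: "\<forall>w\<in>set rws. \<forall>(i, b)\<in>set w. i < k0"
    and W: "\<forall>(k, w) \<in> set vs. \<forall>(i, b) \<in> set w. i < k"
  shows "Praw rws vs k0 (code n tab fl) \<longleftrightarrow> Pmath (tbl_grp n tab) fl rws vs"
proof -
  interpret F: group "tbl_grp n tab" using V by (simp add: valid_marked_def)
  let ?x = "code n tab fl"
  let ?F = "tbl_grp n tab"
  have fl: "length fl = k0" "\<forall>x\<in>set fl. x < n" using V_len[OF V] by auto
  have n0: "0 < n" using one_lt[OF V] by simp
  have gsub: "generate ?F (set fl) \<subseteq> {..<n}" using F.generate_incl[of "set fl"] fl by auto
  have p1: "wev ?x w (genr ?x) = er ?x \<longleftrightarrow> word_eval ?F w (\<lambda>i. fl ! i) = \<one>\<^bsub>?F\<^esub>" if w: "w \<in> set rws" for w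
  proof -
    have a: "\<forall>(i, b)\<in>set w. genr ?x i < n" using R w fl genr_tbl[OF V] by fastforce
    have b: "word_eval ?F w (genr ?x) = word_eval ?F w (\<lambda>i. fl ! i)"
      by (rule word_eval_cong) (use R w genr_tbl[OF V] in fastforce)
    show ?thesis using wev_tbl[OF V a] b er_tbl[OF V] by simp
  qed
  have p2: "(\<forall>q < Nc ?x ^ k. (\<forall>i<k. memr k0 ?x (digit (Nc ?x) q i)) \<longrightarrow> wev ?x w (digit (Nc ?x) q) = er ?x)
     \<longleftrightarrow> (\<forall>m. (\<forall>i<k. m i \<in> generate ?F (set fl)) \<longrightarrow> word_eval ?F w m = \<one>\<^bsub>?F\<^esub>)"
    if kw: "(k, w) \<in> set vs" for k w
  proof -
    have dl: "digit n q i < n" for q i using n0 by (simp add: digit_eq)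
    have wd: "wev ?x w (digit n q) = word_eval ?F w (digit n q)" for q
      by (rule wev_tbl[OF V]) (simp add: dl split: prod.splits)
    show ?thesis
    proof
      assume h: "\<forall>q < Nc ?x ^ k. (\<forall>i<k. memr k0 ?x (digit (Nc ?x) q i)) \<longrightarrow> wev ?x w (digit (Nc ?x) q) = er ?x"
      show "\<forall>m. (\<forall>i<k. m i \<in> generate ?F (set fl)) \<longrightarrow> word_eval ?F w m = \<one>\<^bsub>?F\<^esub>"
      proof (intro allI impI)
        fix m assume m: "\<forall>i<k. m i \<in> generate ?F (set fl)"
        then have mn: "\<forall>i<k. m i < n" using gsub by auto
        then obtain q where q: "q < n ^ k" "\<forall>i<k. q div n ^ i mod n = m i" using digits_exist[OF n0] by blast
        have "\<forall>i<k. memr k0 ?x (digit n q i)" using q m mn memr_tbl[OF V] by (simp add: digit_eq[OF n0])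
        then have "wev ?x w (digit n q) = er ?x" using h q by simp
        then have "word_eval ?F w (digit n q) = \<one>\<^bsub>?F\<^esub>" using wd er_tbl[OF V] by simp
        moreover have "word_eval ?F w (digit n q) = word_eval ?F w m"
          by (rule word_eval_cong) (use W kw q in \<open>fastforce simp: digit_eq[OF n0]\<close>)
        ultimately show "word_eval ?F w m = \<one>\<^bsub>?F\<^esub>" by simp
      qed
    next
      assume h: "\<forall>m. (\<forall>i<k. m i \<in> generate ?F (set fl)) \<longrightarrow> word_eval ?F w m = \<one>\<^bsub>?F\<^esub>"
      show "\<forall>q < Nc ?x ^ k. (\<forall>i<k. memr k0 ?x (digit (Nc ?x) q i)) \<longrightarrow> wev ?x w (digit (Nc ?x) q) = er ?x"
      proof (intro allI impI)
        fix q assume q: "q < Nc ?x ^ k" "\<forall>i<k. memr k0 ?x (digit (Nc ?x) q i)"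
        then have "\<forall>i<k. digit n q i \<in> generate ?F (set fl)" using memr_tbl[OF V] dl by simp
        then have "word_eval ?F w (digit n q) = \<one>\<^bsub>?F\<^esub>" using h by blast
        then show "wev ?x w (digit (Nc ?x) q) = er ?x" using wd er_tbl[OF V] by simp
      qed
    qed
  qed
  show ?thesis unfolding Praw_def Pmath_def
    apply (rule conj_cong)
     apply (rule ball_cong[OF refl])
     apply (erule p1)
    apply (rule ball_cong[OF refl])
    subgoal for x by (cases x) (simp only: prod.case, erule p2)
    done
qed


lemma group_homI: "group G \<Longrightarrow> group F \<Longrightarrow> h \<in> hom G F \<Longrightarrow> group_hom G F h"
  by (simp add: group_hom_def group_hom_axioms_def)

lemma word_eval_hom:
  assumes GH: "group_hom G F h" and c: "\<forall>(i, b)\<in>set w. g i \<in> carrier G"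
  shows "h (word_eval G w g) = word_eval F w (\<lambda>i. h (g i))"
  using c
proof (induction w)
  case Nil
  interpret GH: group_hom G F h by (rule GH)
  show ?case by simp
next
  case (Cons a w)
  interpret GH: group_hom G F h by (rule GH)
  obtain i b where a: "a = (i, b)" by fastforce
  have gi: "g i \<in> carrier G" using Cons.prems a by auto
  have wc: "word_eval G w g \<in> carrier G" using Cons.prems by (intro GH.G.word_eval_closed) auto
  show ?case using Cons gi wc a by auto
qed

context group begin

lemma word_eval_append:
  "(\<forall>(i, b)\<in>set w1. g i \<in> carrier G) \<Longrightarrow> (\<forall>(i, b)\<in>set w2. g i \<in> carrier G) \<Longrightarrow>
   word_eval G (w1 @ w2) g = word_eval G w1 g \<otimes> word_eval G w2 g"
proof (induction w1)
  case Nil then show ?case using word_eval_closed[of w2 g] by simp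
next
  case (Cons a w1)
  obtain i b where a: "a = (i, b)" by fastforce
  have gi: "g i \<in> carrier G" using Cons.prems a by auto
  have c1: "word_eval G w1 g \<in> carrier G" "word_eval G w2 g \<in> carrier G"
    using Cons.prems by (auto intro!: word_eval_closed)
  show ?case using Cons a gi c1 by (simp add: m_assoc)
qed

lemma gen_word:
  assumes s: "set s \<subseteq> carrier G" and a: "a \<in> generate G (set s)"
  shows "\<exists>w. (\<forall>(i, b)\<in>set w. i < length s) \<and> a = word_eval G w (\<lambda>i. s ! i)"
  using a
proof (induction rule: generate.induct)
  case one then show ?case by (intro exI[of _ "[]"]) simp
next
  case (incl h)
  then obtain i where i: "i < length s" "h = s ! i" by (auto simp: in_set_conv_nth)
  then have "s ! i \<in> carrier G" using s by auto
  then show ?case using i by (intro exI[of _ "[(i, False)]"]) simp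
next
  case (inv h)
  then obtain i where i: "i < length s" "h = s ! i" by (auto simp: in_set_conv_nth)
  then have "s ! i \<in> carrier G" using s by auto
  then show ?case using i by (intro exI[of _ "[(i, True)]"]) simp
next
  case (eng h1 h2)
  obtain w1 where w1: "\<forall>(i, b)\<in>set w1. i < length s" "h1 = word_eval G w1 (\<lambda>i. s ! i)" using eng.IH(1) by blast
  obtain w2 where w2: "\<forall>(i, b)\<in>set w2. i < length s" "h2 = word_eval G w2 (\<lambda>i. s ! i)" using eng.IH(2) by blast
  have c1: "\<forall>(i, b)\<in>set w1. s ! i \<in> carrier G" using w1 s by fastforce
  have c2: "\<forall>(i, b)\<in>set w2. s ! i \<in> carrier G" using w2 s by fastforce
  show ?case using w1 w2 c1 c2 by (intro exI[of _ "w1 @ w2"]) (auto simp: word_eval_append)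
qed

lemma nc_normal: "A \<subseteq> carrier G \<Longrightarrow> normal_closure G A \<lhd> G"
  unfolding normal_closure_def
proof (rule normal_generateI)
  assume A: "A \<subseteq> carrier G"
  show "{x \<otimes> a \<otimes> inv x |x a. x \<in> carrier G \<and> a \<in> A} \<subseteq> carrier G" using A by auto
  fix h g assume h: "h \<in> {x \<otimes> a \<otimes> inv x |x a. x \<in> carrier G \<and> a \<in> A}" and g: "g \<in> carrier G"
  then obtain x a where xa: "h = x \<otimes> a \<otimes> inv x" "x \<in> carrier G" "a \<in> A" by blast
  have ac: "a \<in> carrier G" using xa A by auto
  have "g \<otimes> h \<otimes> inv g = (g \<otimes> x) \<otimes> a \<otimes> inv (g \<otimes> x)"
    using xa ac g by (simp add: inv_mult_group m_assoc)
  then show "g \<otimes> h \<otimes> inv g \<in> {x \<otimes> a \<otimes> inv x |x a. x \<in> carrier G \<and> a \<in> A}"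
    using xa g by blast
qed

lemma nc_incl: "A \<subseteq> carrier G \<Longrightarrow> A \<subseteq> normal_closure G A"
  unfolding normal_closure_def
proof
  fix a assume A: "A \<subseteq> carrier G" and a: "a \<in> A"
  then have "a = \<one> \<otimes> a \<otimes> inv \<one>" by auto
  then have "a \<in> {x \<otimes> a \<otimes> inv x |x a. x \<in> carrier G \<and> a \<in> A}" using a by blast
  then show "a \<in> generate G {x \<otimes> a \<otimes> inv x |x a. x \<in> carrier G \<and> a \<in> A}" by (rule generate.incl)
qed

lemma nc_min: "N \<lhd> G \<Longrightarrow> A \<subseteq> N \<Longrightarrow> normal_closure G A \<subseteq> N"
  unfolding normal_closure_def
  by (rule generate_subgroup_incl) (auto intro: normal.inv_op_closed2 normal_imp_subgroup)

end

lemma setc_eq: "(\<forall>i<n. f i = g i) \<Longrightarrow> {f i | i. i < n} = {g i | i. i < n}"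
proof (rule Collect_cong)
  fix v assume h: "\<forall>i<n. f i = g i"
  show "(\<exists>i. v = f i \<and> i < n) = (\<exists>i. v = g i \<and> i < n)"
  proof
    assume "\<exists>i. v = f i \<and> i < n" then obtain i where "v = f i" "i < n" by blast
    then show "\<exists>i. v = g i \<and> i < n" using h by (intro exI[of _ i]) auto
  next
    assume "\<exists>i. v = g i \<and> i < n" then obtain i where "v = g i" "i < n" by blast
    then show "\<exists>i. v = f i \<and> i < n" using h by (intro exI[of _ i]) auto
  qed
qed

definition "wordof G s r = (SOME w. (\<forall>(i, b)\<in>set w. i < length s) \<and> r = word_eval G w (\<lambda>i. s ! i))"

definition "Kset G rs vs = normal_closure G (set rs \<union> (\<Union>(k, w)\<in>set vs. word_values G k w))"

context
  fixes G :: "('a, 'b) monoid_scheme" and rs s :: "'a list" and vs :: "(nat \<times> (nat \<times> bool) list) list"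
  assumes grp: "group G" and rsc: "set rs \<subseteq> carrier G"
    and W: "\<forall>(k, w) \<in> set vs. \<forall>(i, b) \<in> set w. i < k"
    and gl: "gen_list G s"
begin

interpretation G: group G by (rule grp)

lemma wordof_prop: "r \<in> carrier G \<Longrightarrow> (\<forall>(i, b)\<in>set (wordof G s r). i < length s) \<and> r = word_eval G (wordof G s r) (\<lambda>i. s ! i)"
  unfolding wordof_def
  by (rule someI_ex) (use G.gen_word gl in \<open>auto simp: gen_list_def\<close>)

lemma vals_carrier: "(\<Union>(k, w)\<in>set vs. word_values G k w) \<subseteq> carrier G"
proof
  fix v assume "v \<in> (\<Union>(k, w)\<in>set vs. word_values G k w)"
  then obtain k w g where kw: "(k, w) \<in> set vs" "v = word_eval G w g" "\<forall>i<k. g i \<in> carrier G"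
    by (auto simp: word_values_def)
  have "\<forall>(i, b)\<in>set w. g i \<in> carrier G" using W kw by fastforce
  then show "v \<in> carrier G" using kw G.word_eval_closed by simp
qed

lemma A_carrier: "set rs \<union> (\<Union>(k, w)\<in>set vs. word_values G k w) \<subseteq> carrier G"
  using rsc vals_carrier by blast

lemma ker_char:
  assumes F: "group F" and h: "h \<in> hom G F" and len: "length fl = length s"
    and hs: "\<forall>i<length s. h (s ! i) = fl ! i"
  shows "Pmath F fl (map (wordof G s) rs) vs \<longleftrightarrow> Kset G rs vs \<subseteq> kernel G F h"
proof -
  interpret GH: group_hom G F h by (rule group_homI[OF grp F h])
  have sc: "set s \<subseteq> carrier G" and cg: "generate G (set s) = carrier G" using gl by (auto simp: gen_list_def)
  have hset: "h ` set s = set fl"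
  proof -
    have "h ` set s = {h (s ! i) | i. i < length s}" unfolding set_conv_nth by blast
    also have "\<dots> = {fl ! i | i. i < length fl}" using len setc_eq[OF hs] by simp
    also have "\<dots> = set fl" by (auto simp: in_set_conv_nth)
    finally show ?thesis .
  qed
  have img: "h ` carrier G = generate F (set fl)"
    using GH.generate_img[OF sc] cg hset by simp
  have hr: "h r = word_eval F (wordof G s r) (\<lambda>i. fl ! i)" if r: "r \<in> set rs" for r
  proof -
    have rc: "r \<in> carrier G" using r rsc by auto
    note wp = wordof_prop[OF rc]
    have "h r = word_eval F (wordof G s r) (\<lambda>i. h (s ! i))"
      using wp sc by (subst wp[THEN conjunct2]) (rule word_eval_hom[OF GH.group_hom_axioms], fastforce)
    also have "\<dots> = word_eval F (wordof G s r) (\<lambda>i. fl ! i)"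
      by (rule word_eval_cong) (use wp hs in fastforce)
    finally show ?thesis .
  qed
  have hv: "h (word_eval G w g) = word_eval F w (\<lambda>i. h (g i))" "word_eval G w g \<in> carrier G"
    if kw: "(k, w) \<in> set vs" and g: "\<forall>i<k. g i \<in> carrier G" for k w g
  proof -
    have "\<forall>(i, b)\<in>set w. g i \<in> carrier G" using W kw g by fastforce
    then show "h (word_eval G w g) = word_eval F w (\<lambda>i. h (g i))" "word_eval G w g \<in> carrier G"
      using word_eval_hom[OF GH.group_hom_axioms] G.word_eval_closed by auto
  qed
  show ?thesis
  proof
    assume P: "Pmath F fl (map (wordof G s) rs) vs"
    have P1: "\<forall>w\<in>set (map (wordof G s) rs). word_eval F w (\<lambda>i. fl ! i) = \<one>\<^bsub>F\<^esub>"
      and P2: "\<forall>(k, w)\<in>set vs. \<forall>m. (\<forall>i<k. m i \<in> generate F (set fl)) \<longrightarrow> word_eval F w m = \<one>\<^bsub>F\<^esub>"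
      using P unfolding Pmath_def by auto
    have N: "kernel G F h \<lhd> G" by (rule GH.normal_kernel)
    have r_in: "r \<in> kernel G F h" if r: "r \<in> set rs" for r
    proof -
      have "wordof G s r \<in> set (map (wordof G s) rs)" using r by simp
      then have "h r = \<one>\<^bsub>F\<^esub>" using hr[OF r] P1 by simp
      then show ?thesis using r rsc unfolding kernel_def by auto
    qed
    have v_in: "v \<in> kernel G F h" if kw: "(k, w) \<in> set vs" and v: "v \<in> word_values G k w" for k w v
    proof -
      obtain g where g: "v = word_eval G w g" "\<forall>i<k. g i \<in> carrier G" using v unfolding word_values_def by blast
      have m: "\<forall>i<k. h (g i) \<in> generate F (set fl)" using g(2) img by auto
      have "\<forall>m. (\<forall>i<k. m i \<in> generate F (set fl)) \<longrightarrow> word_eval F w m = \<one>\<^bsub>F\<^esub>"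
        using bspec[OF P2 kw] by (simp only: prod.case)
      then have "word_eval F w (\<lambda>i. h (g i)) = \<one>\<^bsub>F\<^esub>" using m by (elim allE[of _ "\<lambda>i. h (g i)"]) (erule mp)
      then show ?thesis using hv[OF kw g(2)] g(1) unfolding kernel_def by auto
    qed
    have "set rs \<union> (\<Union>(k, w)\<in>set vs. word_values G k w) \<subseteq> kernel G F h"
    proof
      fix v assume "v \<in> set rs \<union> (\<Union>(k, w)\<in>set vs. word_values G k w)"
      then consider "v \<in> set rs" | kw where "kw \<in> set vs" "v \<in> (case kw of (k, w) \<Rightarrow> word_values G k w)"
        by blast
      then show "v \<in> kernel G F h"
      proof cases
        case 1 then show ?thesis by (rule r_in)
      next
        case 2 then show ?thesis using v_in by (cases kw) auto
      qed
    qed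
    then show "Kset G rs vs \<subseteq> kernel G F h" unfolding Kset_def by (rule G.nc_min[OF N])
  next
    assume K: "Kset G rs vs \<subseteq> kernel G F h"
    have AK: "set rs \<union> (\<Union>(k, w)\<in>set vs. word_values G k w) \<subseteq> kernel G F h"
      using G.nc_incl[OF A_carrier] K unfolding Kset_def by (rule subset_trans)
    have P1: "word_eval F w (\<lambda>i. fl ! i) = \<one>\<^bsub>F\<^esub>" if w: "w \<in> set (map (wordof G s) rs)" for w
    proof -
      obtain r where r: "r \<in> set rs" "w = wordof G s r" using w by auto
      have "r \<in> kernel G F h" using AK r by blast
      then have "h r = \<one>\<^bsub>F\<^esub>" unfolding kernel_def by simp
      then show ?thesis using hr[OF r(1)] r(2) by simp
    qed
    have P2: "word_eval F w m = \<one>\<^bsub>F\<^esub>" if kw: "(k, w) \<in> set vs" and m: "\<forall>i<k. m i \<in> generate F (set fl)" for k w m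
    proof -
      define gg where "gg i = (if i < k then (SOME g. g \<in> carrier G \<and> h g = m i) else \<one>\<^bsub>G\<^esub>)" for i
      have gg: "gg i \<in> carrier G \<and> (i < k \<longrightarrow> h (gg i) = m i)" for i
      proof (cases "i < k")
        case True
        then have mi: "m i \<in> generate F (set fl)" using m by blast
        have "m i \<in> h ` carrier G" unfolding img by (rule mi)
        then obtain g0 where g0: "m i = h g0" "g0 \<in> carrier G" by (rule imageE)
        have ex: "\<exists>g. g \<in> carrier G \<and> h g = m i" using g0 by (intro exI[of _ g0] conjI) simp_all
        have "gg i = (SOME g. g \<in> carrier G \<and> h g = m i)" using True by (simp add: gg_def)
        then show ?thesis using someI_ex[OF ex] by simp
      qed (simp add: gg_def)
      have ggc: "\<forall>i<k. gg i \<in> carrier G" using gg by blast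
      have "word_eval G w gg \<in> word_values G k w" using ggc unfolding word_values_def by blast
      then have "word_eval G w gg \<in> kernel G F h" using AK kw by blast
      then have "h (word_eval G w gg) = \<one>\<^bsub>F\<^esub>" unfolding kernel_def by simp
      moreover have "h (word_eval G w gg) = word_eval F w (\<lambda>i. h (gg i))" by (rule hv(1)[OF kw ggc])
      moreover have "word_eval F w (\<lambda>i. h (gg i)) = word_eval F w m"
      proof (rule word_eval_cong)
        have "\<forall>(i, b)\<in>set w. i < k" using W kw by blast
        then show "\<forall>(i, b)\<in>set w. h (gg i) = m i" using gg by auto
      qed
      ultimately show ?thesis by simp
    qed
    show "Pmath F fl (map (wordof G s) rs) vs" unfolding Pmath_def
      using P1 P2 by auto
  qed
qed
end


lemma quot_ext:
  assumes N: "N \<lhd> G" and F: "group F" and gl: "gen_list G s"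
  shows "(\<exists>hH\<in>hom (G Mod N) F. \<forall>i<length s. hH (map (r_coset G N) s ! i) = fl ! i) \<longleftrightarrow>
         (\<exists>h\<in>hom G F. (\<forall>i<length s. h (s ! i) = fl ! i) \<and> N \<subseteq> kernel G F h)"
proof -
  interpret N: normal N G by (rule N)
  interpret F: group F by (rule F)
  have sc: "set s \<subseteq> carrier G" using gl by (simp add: gen_list_def)
  have QG: "group (G Mod N)" by (rule N.factorgroup_is_group)
  show ?thesis
  proof
    assume "\<exists>hH\<in>hom (G Mod N) F. \<forall>i<length s. hH (map (r_coset G N) s ! i) = fl ! i"
    then obtain hH where hH: "hH \<in> hom (G Mod N) F" "\<forall>i<length s. hH (map (r_coset G N) s ! i) = fl ! i" by blast
    define h where "h a = hH (N #>\<^bsub>G\<^esub> a)" for a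
    have cos: "N #>\<^bsub>G\<^esub> a \<in> carrier (G Mod N)" if "a \<in> carrier G" for a
      using that by (simp add: FactGroup_def N.rcosetsI N.subset)
    have hom: "h \<in> hom G F"
    proof (rule homI)
      fix a assume "a \<in> carrier G"
      then show "h a \<in> carrier F" unfolding h_def using cos hom_in_carrier[OF hH(1)] by blast
    next
      fix a b assume a: "a \<in> carrier G" and b: "b \<in> carrier G"
      have "h (a \<otimes>\<^bsub>G\<^esub> b) = hH ((N #>\<^bsub>G\<^esub> a) \<otimes>\<^bsub>G Mod N\<^esub> (N #>\<^bsub>G\<^esub> b))"
        unfolding h_def using a b by (simp add: FactGroup_def N.rcos_sum)
      also have "\<dots> = h a \<otimes>\<^bsub>F\<^esub> h b" unfolding h_def using hom_mult[OF hH(1) cos[OF a] cos[OF b]] .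
      finally show "h (a \<otimes>\<^bsub>G\<^esub> b) = h a \<otimes>\<^bsub>F\<^esub> h b" .
    qed
    have vals: "\<forall>i<length s. h (s ! i) = fl ! i" using hH(2) by (simp add: h_def)
    have ker: "N \<subseteq> kernel G F h"
    proof
      fix k assume k: "k \<in> N"
      have kc: "k \<in> carrier G" using k N.subset by auto
      have "N #>\<^bsub>G\<^esub> k = N" by (rule subgroup.rcos_const[OF N.subgroup_axioms N.is_group k])
      then have "h k = hH \<one>\<^bsub>G Mod N\<^esub>" by (simp add: h_def FactGroup_def)
      also have "\<dots> = \<one>\<^bsub>F\<^esub>" using hom_one[OF hH(1) QG F] .
      finally show "k \<in> kernel G F h" using kc by (simp add: kernel_def)
    qed
    show "\<exists>h\<in>hom G F. (\<forall>i<length s. h (s ! i) = fl ! i) \<and> N \<subseteq> kernel G F h"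
      using hom vals ker by blast
  next
    assume "\<exists>h\<in>hom G F. (\<forall>i<length s. h (s ! i) = fl ! i) \<and> N \<subseteq> kernel G F h"
    then obtain h where h: "h \<in> hom G F" "\<forall>i<length s. h (s ! i) = fl ! i" "N \<subseteq> kernel G F h" by blast
    define hH where "hH XX = h (SOME a. a \<in> XX)" for XX
    have key: "hH (N #>\<^bsub>G\<^esub> a) = h a" if a: "a \<in> carrier G" for a
    proof -
      have "a \<in> N #>\<^bsub>G\<^esub> a" using N.rcos_self[OF a N.subgroup_axioms] .
      then have b: "(SOME a'. a' \<in> N #>\<^bsub>G\<^esub> a) \<in> N #>\<^bsub>G\<^esub> a" by (rule someI)
      then obtain k where k: "k \<in> N" "(SOME a'. a' \<in> N #>\<^bsub>G\<^esub> a) = k \<otimes>\<^bsub>G\<^esub> a" unfolding r_coset_def by blast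
      have kc: "k \<in> carrier G" "h k = \<one>\<^bsub>F\<^esub>" using k h(3) by (auto simp: kernel_def)
      have "hH (N #>\<^bsub>G\<^esub> a) = h k \<otimes>\<^bsub>F\<^esub> h a" unfolding hH_def k(2) using hom_mult[OF h(1) kc(1) a] .
      also have "\<dots> = h a" using kc(2) hom_in_carrier[OF h(1) a] by simp
      finally show ?thesis .
    qed
    have rc: "\<exists>a\<in>carrier G. XX = N #>\<^bsub>G\<^esub> a" if "XX \<in> carrier (G Mod N)" for XX
      using that by (auto simp: FactGroup_def RCOSETS_def)
    have hom: "hH \<in> hom (G Mod N) F"
    proof (rule homI)
      fix XX assume "XX \<in> carrier (G Mod N)"
      then obtain a where a: "a \<in> carrier G" "XX = N #>\<^bsub>G\<^esub> a" using rc by blast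
      then show "hH XX \<in> carrier F" using key hom_in_carrier[OF h(1) a(1)] by simp
    next
      fix XX YY assume "XX \<in> carrier (G Mod N)" "YY \<in> carrier (G Mod N)"
      then obtain a b where a: "a \<in> carrier G" "XX = N #>\<^bsub>G\<^esub> a" and b: "b \<in> carrier G" "YY = N #>\<^bsub>G\<^esub> b" using rc by blast
      have "XX \<otimes>\<^bsub>G Mod N\<^esub> YY = N #>\<^bsub>G\<^esub> (a \<otimes>\<^bsub>G\<^esub> b)" using a b by (simp add: FactGroup_def N.rcos_sum)
      then have "hH (XX \<otimes>\<^bsub>G Mod N\<^esub> YY) = h (a \<otimes>\<^bsub>G\<^esub> b)" using key a b by simp
      also have "\<dots> = h a \<otimes>\<^bsub>F\<^esub> h b" using hom_mult[OF h(1) a(1) b(1)] .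
      finally show "hH (XX \<otimes>\<^bsub>G Mod N\<^esub> YY) = hH XX \<otimes>\<^bsub>F\<^esub> hH YY" using key a b by simp
    qed
    have vals: "\<forall>i<length s. hH (map (r_coset G N) s ! i) = fl ! i"
      using h(2) key sc by (auto simp: nth_mem subset_iff)
    show "\<exists>hH\<in>hom (G Mod N) F. \<forall>i<length s. hH (map (r_coset G N) s ! i) = fl ! i"
      using hom vals by blast
  qed
qed

lemma quot_gen:
  assumes N: "N \<lhd> G" and gl: "gen_list G s"
  shows "gen_list (G Mod N) (map (r_coset G N) s)"
proof -
  interpret N: normal N G by (rule N)
  have sc: "set s \<subseteq> carrier G" and cg: "generate G (set s) = carrier G" using gl by (auto simp: gen_list_def)
  interpret GH: group_hom G "G Mod N" "r_coset G N"
    by (rule group_homI[OF N.is_group N.factorgroup_is_group N.r_coset_hom_Mod])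
  have "generate (G Mod N) (r_coset G N ` set s) = r_coset G N ` carrier G"
    using GH.generate_img[OF sc] cg by simp
  also have "\<dots> = carrier (G Mod N)" by (auto simp: FactGroup_def RCOSETS_def)
  finally have g: "generate (G Mod N) (set (map (r_coset G N) s)) = carrier (G Mod N)" by simp
  have "set (map (r_coset G N) s) \<subseteq> carrier (G Mod N)" using sc by (auto simp: FactGroup_def RCOSETS_def)
  then show ?thesis using g by (simp add: gen_list_def)
qed


lemma reduce:
  fixes G :: "('a, 'b) monoid_scheme" and rs s :: "'a list" and vs :: "(nat \<times> (nat \<times> bool) list) list"
  assumes grp: "group G" and rsc: "set rs \<subseteq> carrier G"
    and W: "\<forall>(k, w) \<in> set vs. \<forall>(i, b) \<in> set w. i < k"
    and gl: "gen_list G s"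
    and V: "valid_marked (length s) n tab fl"
  shows "extends_hom (G Mod Kset G rs vs) (map (r_coset G (Kset G rs vs)) s) n tab fl \<longleftrightarrow>
         extends_hom G s n tab fl \<and> Praw (map (wordof G s) rs) vs (length s) (code n tab fl)"
proof -
  interpret G: group G by (rule grp)
  let ?K = "Kset G rs vs"
  let ?F = "tbl_grp n tab"
  have F: "group ?F" using V by (simp add: valid_marked_def)
  have N: "?K \<lhd> G" unfolding Kset_def by (rule G.nc_normal[OF A_carrier[OF grp rsc W gl]])
  have len: "length fl = length s" using V by (simp add: valid_marked_def)
  have R: "\<forall>w\<in>set (map (wordof G s) rs). \<forall>(i, b)\<in>set w. i < length s"
  proof
    fix w assume "w \<in> set (map (wordof G s) rs)"
    then obtain r where r: "r \<in> set rs" "w = wordof G s r" by auto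
    have "r \<in> carrier G" using r rsc by auto
    then show "\<forall>(i, b)\<in>set w. i < length s" using wordof_prop[OF grp rsc W gl] r(2) by blast
  qed
  have PR: "Praw (map (wordof G s) rs) vs (length s) (code n tab fl) \<longleftrightarrow> Pmath ?F fl (map (wordof G s) rs) vs"
    by (rule Praw_tbl[OF V R W])
  have E1: "extends_hom (G Mod ?K) (map (r_coset G ?K) s) n tab fl \<longleftrightarrow>
     (\<exists>h\<in>hom G ?F. (\<forall>i<length s. h (s ! i) = fl ! i) \<and> ?K \<subseteq> kernel G ?F h)"
    unfolding extends_hom_def using quot_ext[OF N F gl, of fl] by simp
  show ?thesis
  proof
    assume "extends_hom (G Mod ?K) (map (r_coset G ?K) s) n tab fl"
    then obtain h where h: "h \<in> hom G ?F" "\<forall>i<length s. h (s ! i) = fl ! i" "?K \<subseteq> kernel G ?F h"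
      using E1 by blast
    have "Pmath ?F fl (map (wordof G s) rs) vs" using ker_char[OF grp rsc W gl F h(1) len h(2)] h(3) by simp
    then show "extends_hom G s n tab fl \<and> Praw (map (wordof G s) rs) vs (length s) (code n tab fl)"
      using PR h(1,2) unfolding extends_hom_def by blast
  next
    assume a: "extends_hom G s n tab fl \<and> Praw (map (wordof G s) rs) vs (length s) (code n tab fl)"
    then obtain h where h: "h \<in> hom G ?F" "\<forall>i<length s. h (s ! i) = fl ! i" unfolding extends_hom_def by blast
    have "?K \<subseteq> kernel G ?F h" using ker_char[OF grp rsc W gl F h(1) len h(2)] a PR by simp
    then show "extends_hom (G Mod ?K) (map (r_coset G ?K) s) n tab fl" using E1 h by blast
  qed
qed

lemma eval_Comp_inv: "Defs.eval (Comp f gs) xs z \<Longrightarrow> \<exists>ys. list_all2 (\<lambda>g y. Defs.eval g xs y) gs ys \<and> Defs.eval f ys z"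
  by (cases rule: eval.cases) auto

lemma eval_add: "Defs.eval add_p [x, y] (x + y)"
  using comp_add[unfolded comp_def, rule_format, of "[x, y]"] by simp

lemma comp_evalD: "comp t F \<Longrightarrow> Defs.eval t xs v \<Longrightarrow> v = F xs"
  unfolding comp_def using eval_det by blast

lemma list_all2_two: "list_all2 P [a, b] ys \<Longrightarrow> \<exists>y1 y2. ys = [y1, y2] \<and> P a y1 \<and> P b y2"
  by (cases ys; simp; case_tac list; simp)

lemma list_all2_one: "list_all2 P [a] ys \<Longrightarrow> \<exists>y1. ys = [y1] \<and> P a y1"
  by (cases ys; simp)

lemma halts_add:
  assumes "comp a A"
  shows "halts (Comp add_p [t, a]) c \<longleftrightarrow> halts t c"
    and "Defs.eval t [c] v \<Longrightarrow> Defs.eval (Comp add_p [t, a]) [c] z \<longleftrightarrow> z = v + A [c]"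
proof -
  show "halts (Comp add_p [t, a]) c \<longleftrightarrow> halts t c"
  proof
    assume "halts (Comp add_p [t, a]) c"
    then obtain z where "Defs.eval (Comp add_p [t, a]) [c] z" unfolding halts_def by blast
    from eval_Comp_inv[OF this] obtain ys where "list_all2 (\<lambda>g y. Defs.eval g [c] y) [t, a] ys" by blast
    from list_all2_two[OF this] obtain y1 where "Defs.eval t [c] y1" by blast
    then show "halts t c" unfolding halts_def by blast
  next
    assume "halts t c"
    then obtain v where v: "Defs.eval t [c] v" unfolding halts_def by blast
    have "Defs.eval a [c] (A [c])" using assms unfolding comp_def by blast
    then have "Defs.eval (Comp add_p [t, a]) [c] (v + A [c])"
      using v eval_add by (intro eval_Comp) auto
    then show "halts (Comp add_p [t, a]) c" unfolding halts_def by blast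
  qed
next
  assume v: "Defs.eval t [c] v"
  have "Defs.eval a [c] (A [c])" using assms unfolding comp_def by blast
  then have e: "Defs.eval (Comp add_p [t, a]) [c] (v + A [c])"
    using v eval_add by (intro eval_Comp) auto
  show "Defs.eval (Comp add_p [t, a]) [c] z \<longleftrightarrow> z = v + A [c]"
  proof
    assume "Defs.eval (Comp add_p [t, a]) [c] z"
    then show "z = v + A [c]" using eval_det[OF e, of z] by simp
  next
    assume "z = v + A [c]" then show "Defs.eval (Comp add_p [t, a]) [c] z" using e by simp
  qed
qed

lemma halts_add2:
  "halts (Comp add_p [t, u]) c \<longleftrightarrow> halts t c \<and> halts u c"
proof
  assume "halts (Comp add_p [t, u]) c"
  then obtain z where "Defs.eval (Comp add_p [t, u]) [c] z" unfolding halts_def by blast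
  from eval_Comp_inv[OF this] obtain ys where "list_all2 (\<lambda>g y. Defs.eval g [c] y) [t, u] ys" by blast
  from list_all2_two[OF this] obtain y1 y2 where "Defs.eval t [c] y1" "Defs.eval u [c] y2" by blast
  then show "halts t c \<and> halts u c" unfolding halts_def by blast
next
  assume "halts t c \<and> halts u c"
  then obtain v w where "Defs.eval t [c] v" "Defs.eval u [c] w" unfolding halts_def by blast
  then have "Defs.eval (Comp add_p [t, u]) [c] (v + w)"
    using eval_add by (intro eval_Comp) auto
  then show "halts (Comp add_p [t, u]) c" unfolding halts_def by blast
qed

lemma halts_minim:
  assumes p: "comp p F"
  shows "halts (Minim (Comp p [Proj 1])) c \<longleftrightarrow> F [c] = 0"
proof
  assume "halts (Minim (Comp p [Proj 1])) c"
  then obtain v where "Defs.eval (Minim (Comp p [Proj 1])) [c] v" unfolding halts_def by blast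
  then have e: "Defs.eval (Comp p [Proj 1]) [v, c] 0" by (cases rule: eval.cases) auto
  have "comp (Comp p [Proj 1]) (\<lambda>xs. F [arg 1 xs])" by (rule comp_Comp1[OF p comp_Proj])
  from comp_evalD[OF this e] show "F [c] = 0" by simp
next
  assume h: "F [c] = 0"
  have "comp (Comp p [Proj 1]) (\<lambda>xs. F [arg 1 xs])" by (rule comp_Comp1[OF p comp_Proj])
  then have "Defs.eval (Comp p [Proj 1]) [0, c] 0" using h unfolding comp_def by (metis arg_Cons0 arg_ConsS One_nat_def)
  then have "Defs.eval (Minim (Comp p [Proj 1])) [c] 0" by (intro eval_Mn) auto
  then show "halts (Minim (Comp p [Proj 1])) c" unfolding halts_def by blast
qed

lemma halts_cond:
  assumes q: "comp a A"
  shows "halts (Comp (PrimRec Zero (Comp t [Proj 2])) [a, Proj 0]) c \<longleftrightarrow> A [c] = 0 \<or> halts t c"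
proof -
  have pr: "(\<exists>z. Defs.eval (PrimRec Zero (Comp t [Proj 2])) [m, c] z) \<longleftrightarrow> m = 0 \<or> halts t c" for m
  proof
    assume "\<exists>z. Defs.eval (PrimRec Zero (Comp t [Proj 2])) [m, c] z"
    then obtain z where z: "Defs.eval (PrimRec Zero (Comp t [Proj 2])) [m, c] z" by blast
    show "m = 0 \<or> halts t c"
    proof (cases m)
      case (Suc m')
      from z obtain y0 where "Defs.eval (Comp t [Proj 2]) [y0, m', c] z" unfolding Suc by (cases rule: eval.cases) auto
      from eval_Comp_inv[OF this] obtain ys where "list_all2 (\<lambda>g y. Defs.eval g [y0, m', c] y) [Proj 2] ys" "Defs.eval t ys z"
        by blast
      then obtain y' where y': "ys = [y']" "Defs.eval (Proj 2) [y0, m', c] y'" "Defs.eval t ys z" using list_all2_one[of _ "Proj 2" ys] by blast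
      from y'(2) have "y' = c" by (cases rule: eval.cases) auto
      then have "Defs.eval t [c] z" using y' by simp
      then show ?thesis unfolding halts_def by blast
    qed simp
  next
    assume h: "m = 0 \<or> halts t c"
    show "\<exists>z. Defs.eval (PrimRec Zero (Comp t [Proj 2])) [m, c] z"
    proof (cases "m = 0")
      case True
      have "Defs.eval (PrimRec Zero (Comp t [Proj 2])) (0 # [c]) 0" by (rule eval_Pr0[OF eval_Zero])
      then show ?thesis using True by blast
    next
      case False
      then obtain v where v: "Defs.eval t [c] v" using h unfolding halts_def by blast
      have "\<exists>z. Defs.eval (PrimRec Zero (Comp t [Proj 2])) [j, c] z" for j
      proof (induction j)
        case 0
        have "Defs.eval (PrimRec Zero (Comp t [Proj 2])) (0 # [c]) 0" by (rule eval_Pr0[OF eval_Zero])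
        then show ?case by blast
      next
        case (Suc j)
        then obtain y where y: "Defs.eval (PrimRec Zero (Comp t [Proj 2])) [j, c] y" by blast
        have "Defs.eval (Proj 2) [y, j, c] c" using eval_Proj[of 2 "[y, j, c]"] by simp
        then have "Defs.eval (Comp t [Proj 2]) [y, j, c] v" using v by (intro eval_Comp) auto
        from eval_PrS[OF y this] show ?case by blast
      qed
      then show ?thesis by blast
    qed
  qed
  show ?thesis
  proof
    assume "halts (Comp (PrimRec Zero (Comp t [Proj 2])) [a, Proj 0]) c"
    then obtain z where "Defs.eval (Comp (PrimRec Zero (Comp t [Proj 2])) [a, Proj 0]) [c] z" unfolding halts_def by blast
    from eval_Comp_inv[OF this] obtain ys where ys: "list_all2 (\<lambda>g y. Defs.eval g [c] y) [a, Proj 0] ys" "Defs.eval (PrimRec Zero (Comp t [Proj 2])) ys z"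
      by blast
    from list_all2_two[OF ys(1)] obtain y1 y2 where "ys = [y1, y2]" "Defs.eval a [c] y1" "Defs.eval (Proj 0) [c] y2" by blast
    moreover have "y1 = A [c]" using comp_evalD[OF q] calculation(2) by blast
    moreover have "y2 = c" using calculation(3) by (cases rule: eval.cases) auto
    ultimately have "Defs.eval (PrimRec Zero (Comp t [Proj 2])) [A [c], c] z" using ys(2) by simp
    then have "\<exists>z. Defs.eval (PrimRec Zero (Comp t [Proj 2])) [A [c], c] z" by blast
    then show "A [c] = 0 \<or> halts t c" using pr by blast
  next
    assume "A [c] = 0 \<or> halts t c"
    then obtain z where z: "Defs.eval (PrimRec Zero (Comp t [Proj 2])) [A [c], c] z" using pr by blast
    have "Defs.eval a [c] (A [c])" using q unfolding comp_def by blast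
    moreover have "Defs.eval (Proj 0) [c] c" using eval_Proj[of 0 "[c]"] by simp
    ultimately have "Defs.eval (Comp (PrimRec Zero (Comp t [Proj 2])) [a, Proj 0]) [c] z" using z by (intro eval_Comp) auto
    then show "halts (Comp (PrimRec Zero (Comp t [Proj 2])) [a, Proj 0]) c" unfolding halts_def by blast
  qed
qed


theorem mainTheorem11:
  fixes G :: "('a, 'b) monoid_scheme"
    and rs :: "'a list"
    and vs :: "(nat \<times> (nat \<times> bool) list) list"
  assumes "group G"
    and "\<exists>S. finite S \<and> S \<subseteq> carrier G \<and> generate G S = carrier G"
    and "set rs \<subseteq> carrier G"
    and "\<forall>(k, w) \<in> set vs. \<forall>(i, b) \<in> set w. i < k"
  defines "K \<equiv> normal_closure G (set rs \<union> (\<Union>(k, w) \<in> set vs. word_values G k w))"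
  shows "(CFQ G \<longrightarrow> CFQ (G Mod K)) \<and> (ReFQ G \<longrightarrow> ReFQ (G Mod K))
         \<and> (coReFQ G \<longrightarrow> coReFQ (G Mod K))"
proof -
  note grp = assms(1) and rsc = assms(3) and W = assms(4)
  interpret G: group G by (rule grp)
  have KK: "K = Kset G rs vs" unfolding K_def Kset_def by simp
  have Pd: "\<exists>F. comp (P_p (map (wordof G s) rs) vs (length s)) F \<and>
      (\<forall>xs. F xs = 0 \<longleftrightarrow> Praw (map (wordof G s) rs) vs (length s) (arg 0 xs))" for s
    using dec_P unfolding dec_def by blast
  have Nd: "\<exists>F. comp (neg_p (P_p (map (wordof G s) rs) vs (length s))) F \<and>
      (\<forall>xs. F xs = 0 \<longleftrightarrow> \<not> Praw (map (wordof G s) rs) vs (length s) (arg 0 xs))" for s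
    using dec_neg[OF dec_P] unfolding dec_def by blast
  have red: "extends_hom (G Mod K) (map (r_coset G K) s) n tab fl \<longleftrightarrow>
         extends_hom G s n tab fl \<and> Praw (map (wordof G s) rs) vs (length s) (code n tab fl)"
    if "gen_list G s" "valid_marked (length s) n tab fl" for s n tab fl
    unfolding KK by (rule reduce[OF grp rsc W that])
  have qg: "gen_list (G Mod K) (map (r_coset G K) s)" if gl: "gen_list G s" for s
  proof -
    have N: "K \<lhd> G" unfolding KK Kset_def by (rule G.nc_normal[OF A_carrier[OF grp rsc W gl]])
    show ?thesis by (rule quot_gen[OF N gl])
  qed
  have C1: "CFQ (G Mod K)" if hyp: "CFQ G"
  proof -
    obtain s t where gl: "gen_list G s" and ht: "\<forall>n tab fl. valid_marked (length s) n tab fl \<longrightarrow>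
      halts t (code n tab fl) \<and> (Defs.eval t [code n tab fl] 0 \<longleftrightarrow> extends_hom G s n tab fl)"
      using hyp unfolding CFQ_def by blast
    let ?p = "P_p (map (wordof G s) rs) vs (length s)"
    obtain F where F: "comp ?p F" "\<And>xs. F xs = 0 \<longleftrightarrow> Praw (map (wordof G s) rs) vs (length s) (arg 0 xs)"
      using Pd[of s] by blast
    let ?t = "Comp add_p [t, ?p]"
    have "valid_marked (length (map (r_coset G K) s)) n tab fl \<longrightarrow>
      halts ?t (code n tab fl) \<and> (Defs.eval ?t [code n tab fl] 0 \<longleftrightarrow> extends_hom (G Mod K) (map (r_coset G K) s) n tab fl)"
      for n tab fl
    proof
      assume V: "valid_marked (length (map (r_coset G K) s)) n tab fl"
      then have V': "valid_marked (length s) n tab fl" by simp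
      let ?c = "code n tab fl"
      have htc: "halts t ?c" "Defs.eval t [?c] 0 \<longleftrightarrow> extends_hom G s n tab fl" using ht[rule_format, OF V'] by simp_all
      obtain v where v: "Defs.eval t [?c] v" using htc(1) unfolding halts_def by blast
      have h1: "halts ?t ?c" using halts_add(1)[OF F(1)] htc(1) by simp
      have "Defs.eval ?t [?c] 0 \<longleftrightarrow> 0 = v + F [?c]" by (rule halts_add(2)[OF F(1) v])
      also have "\<dots> \<longleftrightarrow> v = 0 \<and> F [?c] = 0" by linarith
      also have "\<dots> \<longleftrightarrow> Defs.eval t [?c] 0 \<and> Praw (map (wordof G s) rs) vs (length s) ?c"
      proof -
        have "v = 0 \<longleftrightarrow> Defs.eval t [?c] 0"
        proof
          assume "v = 0" then show "Defs.eval t [?c] 0" using v by simp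
        next
          assume "Defs.eval t [?c] 0" then show "v = 0" by (rule eval_det[OF v])
        qed
        then show ?thesis using F(2)[of "[?c]"] by simp
      qed
      also have "\<dots> \<longleftrightarrow> extends_hom (G Mod K) (map (r_coset G K) s) n tab fl"
        using htc(2) red[OF gl V'] by simp
      finally show "halts ?t ?c \<and> (Defs.eval ?t [?c] 0 \<longleftrightarrow> extends_hom (G Mod K) (map (r_coset G K) s) n tab fl)"
        using h1 by blast
    qed
    then show ?thesis unfolding CFQ_def
      by (intro exI[of _ "map (r_coset G K) s"] conjI[OF qg[OF gl]] exI[of _ ?t] allI)
  qed
  have C2: "ReFQ (G Mod K)" if hyp: "ReFQ G"
  proof -
    obtain s t where gl: "gen_list G s" and ht: "\<forall>n tab fl. valid_marked (length s) n tab fl \<longrightarrow>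
      (halts t (code n tab fl) \<longleftrightarrow> extends_hom G s n tab fl)"
      using hyp unfolding ReFQ_def by blast
    let ?p = "P_p (map (wordof G s) rs) vs (length s)"
    obtain F where F: "comp ?p F" "\<And>xs. F xs = 0 \<longleftrightarrow> Praw (map (wordof G s) rs) vs (length s) (arg 0 xs)"
      using Pd[of s] by blast
    let ?t = "Comp add_p [t, Minim (Comp ?p [Proj 1])]"
    have "valid_marked (length (map (r_coset G K) s)) n tab fl \<longrightarrow>
      (halts ?t (code n tab fl) \<longleftrightarrow> extends_hom (G Mod K) (map (r_coset G K) s) n tab fl)"
      for n tab fl
    proof
      assume V: "valid_marked (length (map (r_coset G K) s)) n tab fl"
      then have V': "valid_marked (length s) n tab fl" by simp
      let ?c = "code n tab fl"
      have "halts ?t ?c \<longleftrightarrow> halts t ?c \<and> halts (Minim (Comp ?p [Proj 1])) ?c" by (rule halts_add2)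
      also have "\<dots> \<longleftrightarrow> extends_hom G s n tab fl \<and> Praw (map (wordof G s) rs) vs (length s) ?c"
        using ht[rule_format, OF V'] halts_minim[OF F(1)] F(2)[of "[?c]"] by simp
      also have "\<dots> \<longleftrightarrow> extends_hom (G Mod K) (map (r_coset G K) s) n tab fl"
        using red[OF gl V'] by simp
      finally show "halts ?t ?c \<longleftrightarrow> extends_hom (G Mod K) (map (r_coset G K) s) n tab fl" .
    qed
    then show ?thesis unfolding ReFQ_def
      by (intro exI[of _ "map (r_coset G K) s"] conjI[OF qg[OF gl]] exI[of _ ?t] allI)
  qed
  have C3: "coReFQ (G Mod K)" if hyp: "coReFQ G"
  proof -
    obtain s t where gl: "gen_list G s" and ht: "\<forall>n tab fl. valid_marked (length s) n tab fl \<longrightarrow>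
      (halts t (code n tab fl) \<longleftrightarrow> \<not> extends_hom G s n tab fl)"
      using hyp unfolding coReFQ_def by blast
    let ?q = "neg_p (P_p (map (wordof G s) rs) vs (length s))"
    obtain F where F: "comp ?q F" "\<And>xs. F xs = 0 \<longleftrightarrow> \<not> Praw (map (wordof G s) rs) vs (length s) (arg 0 xs)"
      using Nd[of s] by blast
    let ?t = "Comp (PrimRec Zero (Comp t [Proj 2])) [?q, Proj 0]"
    have "valid_marked (length (map (r_coset G K) s)) n tab fl \<longrightarrow>
      (halts ?t (code n tab fl) \<longleftrightarrow> \<not> extends_hom (G Mod K) (map (r_coset G K) s) n tab fl)"
      for n tab fl
    proof
      assume V: "valid_marked (length (map (r_coset G K) s)) n tab fl"
      then have V': "valid_marked (length s) n tab fl" by simp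
      let ?c = "code n tab fl"
      have "halts ?t ?c \<longleftrightarrow> F [?c] = 0 \<or> halts t ?c" by (rule halts_cond[OF F(1)])
      also have "\<dots> \<longleftrightarrow> \<not> Praw (map (wordof G s) rs) vs (length s) ?c \<or> \<not> extends_hom G s n tab fl"
        using ht[rule_format, OF V'] F(2)[of "[?c]"] by simp
      also have "\<dots> \<longleftrightarrow> \<not> extends_hom (G Mod K) (map (r_coset G K) s) n tab fl"
        using red[OF gl V'] by (simp, blast)
      finally show "halts ?t ?c \<longleftrightarrow> \<not> extends_hom (G Mod K) (map (r_coset G K) s) n tab fl" .
    qed
    then show ?thesis unfolding coReFQ_def
      by (intro exI[of _ "map (r_coset G K) s"] conjI[OF qg[OF gl]] exI[of _ ?t] allI)
  qed
  show ?thesis using C1 C2 C3 by blast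
qed


end
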